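(* Fix any integer $d\geq 3$, any prime power $q$, and any group $\Gamma$. Let $I=\{i_0<i_1<i_2\}\subseteq[d-1]$ and let $s$ be a face of $\mathcal{B}^{d,[d-1]\setminus I}_q$ (i.e. a chain of subspaces of $\mathbb{F}_q^d$ with dimensions outside $I$). Assume that (1) $2i_0\leq i_1$, or there is a subspace $V\in s$ with $i_0<\dim V<i_1$; and (2) either $2i_1-i_0\leq i_2$, or $2i_1-\dim(V)\leq i_2$ where $V\in s$ is a subspace with $i_0<\dim V<i_1$, or there is a subspace $W\in s$ with $i_1<\dim W<i_2$. Then the complex $\mathcal{B}^{d,I}_{q,s}$ is a $1$-coboundary expander with $h^1(\mathcal{B}^{d,I}_{q,s},\Gamma)\geq\frac{1}{13}$.
   Context: The flags complex $\mathcal{B}^d_q$ has vertices the nonzero proper subspaces of $\mathbb{F}_q^d$ (colored by dimension) and faces the chains of such subspaces; it carries the uniform distribution on maximal chains and induced distributions on lower faces. For a set of dimensions $T$, $\mathcal{B}^{d,T}_q$ is the projection onto subspaces with dimension in $T$. $\mathcal{B}^{d,I}_{q,s}$ denotes the link of $s$ in $\mathcal{B}^d_q$ projected onto colors $I$: its faces are the chains $t$ of subspaces with dimensions in $I$ such that $s\cup t$ is a chain, with the induced (conditional) distribution. For a group $\Gamma$: $1$-cochains are functions $f$ on ordered edges with $f(u,v)=f(v,u)^{-1}$, $\delta f(u,v,w)=f(u,v)f(v,w)f(w,u)$, $\delta g(u,v)=g(u)g(v)^{-1}$; $Z^1=\ker\delta$, $B^1=\{\delta g\}$; $h^1=\min_{f\notin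 Z^1}\mathrm{wt}(\delta f)/\mathrm{dist}(f,Z^1)$, with $\mathrm{wt}$ the triangle-measure where $\delta f\neq\mathrm{id}$ and $\mathrm{dist}$ the edge-measure distance; a $1$-coboundary expander additionally has $Z^1=B^1$. *)

theory Defs
  imports "HOL-Analysis.Analysis"
begin

text \<open>Flags complex over F_q^d, modelled with a finite field type 'k (q = CARD('k)) and
  vectors in 'k^'n, so that d = CARD('n).\<close>

definition sub_vertex :: "('k::field ^ 'n) set \<Rightarrow> bool" where
  "sub_vertex V \<longleftrightarrow> vec.subspace V \<and> 0 < vec.dim V \<and> vec.dim V < CARD('n)"

definition is_chain :: "('k::field ^ 'n) set set \<Rightarrow> bool" where
  "is_chain S \<longleftrightarrow> (\<forall>V\<in>S. sub_vertex V) \<and> (\<forall>U\<in>S. \<forall>V\<in>S. U \<subseteq> V \<or> V \<subseteq> U)"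

text \<open>Maximal chains (complete flags), carrying the uniform distribution.\<close>
definition max_chains :: "('k::field ^ 'n) set set set" where
  "max_chains = {F. is_chain F \<and> (\<forall>G. is_chain G \<and> F \<subseteq> G \<longrightarrow> G = F)}"

definition at_dim :: "('k::field ^ 'n) set set \<Rightarrow> nat \<Rightarrow> ('k ^ 'n) set" where
  "at_dim F i = (THE V. V \<in> F \<and> vec.dim V = i)"

text \<open>Maximal chains containing s; the distribution of the link of s is the uniform
  distribution on these (conditioning), projected to the colours I.\<close>
definition link_flags :: "('k::field ^ 'n) set set \<Rightarrow> ('k ^ 'n) set set set" where
  "link_flags s = {F \<in> max_chains. s \<subseteq> F}"

definition link_prob :: "('k::field ^ 'n) set set \<Rightarrow> (('k ^ 'n) set set \<Rightarrow> bool) \<Rightarrow> real" where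
  "link_prob s P = real (card {F \<in> link_flags s. P F}) / real (card (link_flags s))"

definition link_face :: "('k::field ^ 'n) set set \<Rightarrow> nat set \<Rightarrow> ('k ^ 'n) set set \<Rightarrow> bool" where
  "link_face s I t \<longleftrightarrow> (\<forall>V\<in>t. vec.dim V \<in> I) \<and> is_chain (s \<union> t)"

definition link_edge :: "('k::field ^ 'n) set set \<Rightarrow> nat set \<Rightarrow> ('k ^ 'n) set \<Rightarrow> ('k ^ 'n) set \<Rightarrow> bool" where
  "link_edge s I u v \<longleftrightarrow> u \<noteq> v \<and> link_face s I {u, v}"

definition link_triangle :: "('k::field ^ 'n) set set \<Rightarrow> nat set \<Rightarrow> ('k ^ 'n) set \<Rightarrow> ('k ^ 'n) set \<Rightarrow> ('k ^ 'n) set \<Rightarrow> bool" where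
  "link_triangle s I u v w \<longleftrightarrow> u \<noteq> v \<and> v \<noteq> w \<and> u \<noteq> w \<and> link_face s I {u, v, w}"

text \<open>1-cochains with values in a group (written additively, not necessarily abelian):
  f u v = (f v u)^{-1} on (ordered) edges.\<close>
definition cochains1 :: "('k::field ^ 'n) set set \<Rightarrow> nat set \<Rightarrow> (('k ^ 'n) set \<Rightarrow> ('k ^ 'n) set \<Rightarrow> 'g::group_add) set" where
  "cochains1 s I = {f. \<forall>u v. link_edge s I u v \<longrightarrow> f u v = - f v u}"

definition cob1 :: "(('k::field ^ 'n) set \<Rightarrow> ('k ^ 'n) set \<Rightarrow> 'g::group_add) \<Rightarrow> ('k ^ 'n) set \<Rightarrow> ('k ^ 'n) set \<Rightarrow> ('k ^ 'n) set \<Rightarrow> 'g" where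
  "cob1 f u v w = f u v + f v w + f w u"

definition cocycles1 :: "('k::field ^ 'n) set set \<Rightarrow> nat set \<Rightarrow> (('k ^ 'n) set \<Rightarrow> ('k ^ 'n) set \<Rightarrow> 'g::group_add) set" where
  "cocycles1 s I = {f \<in> cochains1 s I. \<forall>u v w. link_triangle s I u v w \<longrightarrow> cob1 f u v w = 0}"

definition coboundaries1 :: "('k::field ^ 'n) set set \<Rightarrow> nat set \<Rightarrow> (('k ^ 'n) set \<Rightarrow> ('k ^ 'n) set \<Rightarrow> 'g::group_add) set" where
  "coboundaries1 s I = {f \<in> cochains1 s I. \<exists>g. \<forall>u v. link_edge s I u v \<longrightarrow> f u v = g u - g v}"

text \<open>Triangle measure of the set where delta f is not the identity; the top faces of the
  link complex are the I-parts (F_{i0},F_{i1},F_{i2}) of a random flag F containing s.\<close>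
definition wt_cob :: "('k::field ^ 'n) set set \<Rightarrow> nat \<Rightarrow> nat \<Rightarrow> nat \<Rightarrow> (('k ^ 'n) set \<Rightarrow> ('k ^ 'n) set \<Rightarrow> 'g::group_add) \<Rightarrow> real" where
  "wt_cob s i0 i1 i2 f = link_prob s (\<lambda>F. cob1 f (at_dim F i0) (at_dim F i1) (at_dim F i2) \<noteq> 0)"

text \<open>Edge-measure distance: the edge distribution is induced from the top faces by taking
  a uniformly random edge of a random triangle.\<close>
definition edge_dist :: "('k::field ^ 'n) set set \<Rightarrow> nat \<Rightarrow> nat \<Rightarrow> nat \<Rightarrow> (('k ^ 'n) set \<Rightarrow> ('k ^ 'n) set \<Rightarrow> 'g) \<Rightarrow> (('k ^ 'n) set \<Rightarrow> ('k ^ 'n) set \<Rightarrow> 'g) \<Rightarrow> real" where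
  "edge_dist s i0 i1 i2 f g = (1/3) *
     (link_prob s (\<lambda>F. f (at_dim F i0) (at_dim F i1) \<noteq> g (at_dim F i0) (at_dim F i1))
    + link_prob s (\<lambda>F. f (at_dim F i0) (at_dim F i2) \<noteq> g (at_dim F i0) (at_dim F i2))
    + link_prob s (\<lambda>F. f (at_dim F i1) (at_dim F i2) \<noteq> g (at_dim F i1) (at_dim F i2)))"

definition dist_Z1 :: "('k::field ^ 'n) set set \<Rightarrow> nat \<Rightarrow> nat \<Rightarrow> nat \<Rightarrow> (('k ^ 'n) set \<Rightarrow> ('k ^ 'n) set \<Rightarrow> 'g::group_add) \<Rightarrow> real" where
  "dist_Z1 s i0 i1 i2 f = Inf (edge_dist s i0 i1 i2 f ` cocycles1 s {i0, i1, i2})"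

text \<open>The link complex B^{d,I}_{q,s} (I = {i0,i1,i2}) is a 1-coboundary expander over the
  group 'g with h^1 \<ge> c: Z^1 = B^1, and wt(delta f) \<ge> c * dist(f, Z^1) for every
  cochain f not in Z^1 (i.e. the minimum of the ratios is at least c).\<close>
definition link_cob_expander :: "('k::field ^ 'n) set set \<Rightarrow> nat \<Rightarrow> nat \<Rightarrow> nat \<Rightarrow> 'g::group_add itself \<Rightarrow> real \<Rightarrow> bool" where
  "link_cob_expander s i0 i1 i2 G c \<longleftrightarrow>
     (cocycles1 s {i0, i1, i2} :: (('k ^ 'n) set \<Rightarrow> ('k ^ 'n) set \<Rightarrow> 'g) set)
        = coboundaries1 s {i0, i1, i2}
   \<and> (\<forall>f :: ('k ^ 'n) set \<Rightarrow> ('k ^ 'n) set \<Rightarrow> 'g.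
        f \<in> cochains1 s {i0, i1, i2} \<and> f \<notin> cocycles1 s {i0, i1, i2} \<longrightarrow>
        wt_cob s i0 i1 i2 f \<ge> c * dist_Z1 s i0 i1 i2 f)"

end

theory Submission
  imports Defs
begin

abbreviation lin :: "('k::field ^ 'n \<Rightarrow> 'k ^ 'n) \<Rightarrow> bool" where
  "lin h \<equiv> Vector_Spaces.linear (*s) (*s) h"

lemma dim_UNIV_n: "vec.dim (UNIV :: ('k::field ^ 'n) set) = CARD('n)"
  by (simp add: card_cart_basis)

lemma dim_le_n: "vec.dim (X :: ('k::field ^ 'n) set) \<le> CARD('n)"
  using vec.dim_subset[of X UNIV] by (simp add: card_cart_basis)

lemma cmp_dim_sub:
  fixes U V :: "('k::field ^ 'n) set"
  assumes "U \<subseteq> V \<or> V \<subseteq> U" "vec.dim U < vec.dim V"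
  shows "U \<subseteq> V"
  using assms vec.dim_subset[of V U] by auto

lemma sub_eq_dim:
  fixes U V :: "('k::field ^ 'n) set"
  assumes "vec.subspace U" "vec.subspace V" "U \<subseteq> V" "vec.dim U = vec.dim V"
  shows "U = V"
  using assms vec.subspace_dim_equal[of U V] by simp

lemma between_ex:
  fixes A B :: "('k::field ^ 'n) set"
  assumes "vec.subspace A" "vec.subspace B" "A \<subseteq> B" "vec.dim A \<le> k" "k \<le> vec.dim B"
  shows "\<exists>C. vec.subspace C \<and> A \<subseteq> C \<and> C \<subseteq> B \<and> vec.dim C = k"
  using assms
proof (induction "k - vec.dim A" arbitrary: A)
  case 0
  then show ?case by (intro exI[of _ A]) auto
next
  case (Suc m)
  then have lt: "vec.dim A < vec.dim B" by linarith
  have "A \<noteq> B" using lt by auto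
  then obtain x where x: "x \<in> B" "x \<notin> A" using Suc.prems by blast
  let ?A = "vec.span (insert x A)"
  have xs: "x \<notin> vec.span A" using x Suc.prems(1) vec.span_eq_iff by blast
  have d: "vec.dim ?A = vec.dim A + 1" using xs by (simp add: vec.dim_insert)
  have sub: "?A \<subseteq> B" using Suc.prems x by (intro vec.span_minimal) auto
  have AA: "A \<subseteq> ?A" by (meson subset_insertI vec.span_superset order_trans)
  have "\<exists>C. vec.subspace C \<and> ?A \<subseteq> C \<and> C \<subseteq> B \<and> vec.dim C = k"
    using Suc.hyps(1)[of ?A] Suc.hyps(2) Suc.prems d sub by auto
  then show ?case using AA by blast
qed

lemma dim_span_union:
  fixes A B :: "('k::field ^ 'n) set"
  assumes "vec.subspace A" "vec.subspace B"
  shows "vec.dim (vec.span (A \<union> B)) + vec.dim (A \<inter> B) = vec.dim A + vec.dim B"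
proof -
  have sA: "vec.span A = A" "vec.span B = B" using assms by simp_all
  have "vec.span (A \<union> B) = {x + y |x y. x \<in> A \<and> y \<in> B}"
    unfolding vec.span_Un sA ..
  then show ?thesis using vec.dim_sums_Int[OF assms] by simp
qed

lemma dim_span_union_le:
  fixes A B :: "('k::field ^ 'n) set"
  assumes "vec.subspace A" "vec.subspace B"
  shows "vec.dim (vec.span (A \<union> B)) \<le> vec.dim A + vec.dim B"
  using dim_span_union[OF assms] by linarith

lemma chain_Inter_mem:
  assumes "finite C" "C \<noteq> {}" "\<forall>U\<in>C. \<forall>V\<in>C. U \<subseteq> V \<or> V \<subseteq> U"
  shows "\<Inter>C \<in> C"
  using assms
proof (induction C rule: finite_ne_induct)
  case (singleton x) then show ?case by simp
next
  case (insert x F)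
  then have m: "\<Inter>F \<in> F" by blast
  then have "x \<subseteq> \<Inter>F \<or> \<Inter>F \<subseteq> x" using insert.prems by blast
  then show ?case using m by (auto simp: Inter_insert Int_absorb1 Int_absorb2)
qed

lemma chain_Union_mem:
  assumes "finite C" "C \<noteq> {}" "\<forall>U\<in>C. \<forall>V\<in>C. U \<subseteq> V \<or> V \<subseteq> U"
  shows "\<Union>C \<in> C"
  using assms
proof (induction C rule: finite_ne_induct)
  case (singleton x) then show ?case by simp
next
  case (insert x F)
  then have m: "\<Union>F \<in> F" by blast
  then have "x \<subseteq> \<Union>F \<or> \<Union>F \<subseteq> x" using insert.prems by blast
  then show ?case using m by (auto simp: Un_absorb1 Un_absorb2)
qed


definition lo :: "('k::field ^ 'n) set set \<Rightarrow> nat \<Rightarrow> ('k ^ 'n) set" where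
  "lo S k = vec.span (\<Union>{V\<in>S. vec.dim V < k})"

definition hi :: "('k::field ^ 'n) set set \<Rightarrow> nat \<Rightarrow> ('k ^ 'n) set" where
  "hi S k = \<Inter>{V\<in>S. k < vec.dim V}"

definition chn :: "('k::field ^ 'n) set set \<Rightarrow> bool" where
  "chn S \<longleftrightarrow> finite S \<and> (\<forall>V\<in>S. vec.subspace V) \<and> (\<forall>U\<in>S. \<forall>V\<in>S. U \<subseteq> V \<or> V \<subseteq> U)"

lemma lo_sub: "V \<in> S \<Longrightarrow> vec.dim V < k \<Longrightarrow> V \<subseteq> lo S k"
  unfolding lo_def by (rule order_trans[OF _ vec.span_superset]) auto

lemma hi_sub: "V \<in> S \<Longrightarrow> k < vec.dim V \<Longrightarrow> hi S k \<subseteq> V"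
  unfolding hi_def by auto

lemma lo_subspace: "vec.subspace (lo S k)"
  unfolding lo_def by simp

lemma hi_subspace: "chn S \<Longrightarrow> vec.subspace (hi S k)"
  unfolding hi_def chn_def by (intro vec.subspace_Inter) auto

lemma lo_dim:
  assumes "chn S" "0 < k"
  shows "vec.dim (lo S k) < k"
proof (cases "{V\<in>S. vec.dim V < k} = {}")
  case True
  then have e: "\<Union>{V\<in>S. vec.dim V < k} = {}" by auto
  show ?thesis unfolding lo_def e using assms by simp
next
  case False
  have "\<Union>{V\<in>S. vec.dim V < k} \<in> {V\<in>S. vec.dim V < k}"
    using assms False unfolding chn_def by (intro chain_Union_mem) auto
  then show ?thesis unfolding lo_def by (simp add: vec.dim_span)
qed

lemma hi_cases:
  assumes "chn S"
  shows "(hi S k = UNIV \<and> (\<forall>V\<in>S. vec.dim V \<le> k)) \<or> (hi S k \<in> S \<and> k < vec.dim (hi S k))"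
proof (cases "{V\<in>S. k < vec.dim V} = {}")
  case True
  then show ?thesis by (auto simp: hi_def not_less)
next
  case False
  have "\<Inter>{V\<in>S. k < vec.dim V} \<in> {V\<in>S. k < vec.dim V}"
    using assms False unfolding chn_def by (intro chain_Inter_mem) auto
  then show ?thesis unfolding hi_def by simp
qed

lemma hi_dim:
  assumes "chn S" "k < CARD('n)"
  shows "k < vec.dim (hi S k :: ('k::field ^ 'n) set)"
  using hi_cases[OF assms(1), of k] assms(2) by (auto simp: card_cart_basis)

lemma lo_le_hi:
  assumes "chn S" "k \<le> k'"
  shows "lo S k \<subseteq> hi S k'"
proof -
  have "lo S k \<subseteq> W" if W: "W \<in> S" "k' < vec.dim W" for W
  proof -
    have "\<Union>{V\<in>S. vec.dim V < k} \<subseteq> W"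
    proof
      fix x assume "x \<in> \<Union>{V\<in>S. vec.dim V < k}"
      then obtain V where V: "V \<in> S" "vec.dim V < k" "x \<in> V" by blast
      have "V \<subseteq> W" using assms V W unfolding chn_def
        by (intro cmp_dim_sub) auto
      then show "x \<in> W" using V by auto
    qed
    then show ?thesis unfolding lo_def using W assms(1) unfolding chn_def
      by (intro vec.span_minimal) auto
  qed
  then show ?thesis unfolding hi_def by blast
qed

lemma lo_mono: "k \<le> k' \<Longrightarrow> lo S k \<subseteq> lo S k'"
  unfolding lo_def by (intro vec.span_mono) auto

lemma cmp_lo_hi:
  assumes "chn S" "vec.subspace x" "vec.dim x = k" "\<forall>V\<in>S. vec.dim V \<noteq> k"
    "\<forall>V\<in>S. V \<subseteq> x \<or> x \<subseteq> V"
  shows "lo S k \<subseteq> x \<and> x \<subseteq> hi S k"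
proof
  show "lo S k \<subseteq> x" unfolding lo_def
  proof (intro vec.span_minimal assms(2) Union_least)
    fix V assume "V \<in> {V\<in>S. vec.dim V < k}"
    then show "V \<subseteq> x" using assms cmp_dim_sub[of V x] by auto
  qed
  show "x \<subseteq> hi S k" unfolding hi_def
  proof (intro Inter_greatest)
    fix V assume "V \<in> {V\<in>S. k < vec.dim V}"
    then show "x \<subseteq> V" using assms cmp_dim_sub[of x V] by auto
  qed
qed

lemma lo_hi_cmp:
  assumes "lo S k \<subseteq> x" "x \<subseteq> hi S k" "V \<in> S" "vec.dim V \<noteq> k"
  shows "V \<subseteq> x \<or> x \<subseteq> V"
proof (cases "vec.dim V < k")
  case True then show ?thesis using lo_sub[OF assms(3) True] assms by auto
next
  case False then have "k < vec.dim V" using assms by auto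
  then show ?thesis using hi_sub[OF assms(3)] assms by auto
qed

lemma mk_between:
  fixes A B :: "('k::field ^ 'n) set"
  assumes "vec.subspace A" "vec.subspace B" "A \<subseteq> B" "vec.dim A \<le> k" "k \<le> vec.dim B"
  shows "\<exists>x. vec.subspace x \<and> vec.dim x = k \<and> A \<subseteq> x \<and> x \<subseteq> B"
  using between_ex[OF assms] by blast


lemma chain_chn: "is_chain (F :: ('k::{field,finite} ^ 'n) set set) \<Longrightarrow> chn F"
  unfolding is_chain_def chn_def sub_vertex_def by (simp add: finite_subset[OF subset_UNIV])

lemma chain_unique:
  assumes "is_chain F" "U \<in> F" "V \<in> F" "vec.dim U = vec.dim V"
  shows "U = V"
proof -
  have "U \<subseteq> V \<or> V \<subseteq> U" "vec.subspace U" "vec.subspace V"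
    using assms unfolding is_chain_def sub_vertex_def by auto
  then show ?thesis using sub_eq_dim[of U V] sub_eq_dim[of V U] assms(4) by auto
qed

lemma at_dim_eq:
  assumes "is_chain F" "V \<in> F"
  shows "at_dim F (vec.dim V) = V"
  unfolding at_dim_def using assms chain_unique[OF assms(1)] by (intro the_equality) auto

lemma at_dim_eq':
  assumes "is_chain F" "V \<in> F" "vec.dim V = i"
  shows "at_dim F i = V"
  using at_dim_eq[OF assms(1,2)] assms(3) by simp

lemma maxc_has_dim:
  fixes F :: "('k::{field,finite} ^ 'n) set set"
  assumes F: "F \<in> max_chains" and i: "0 < i" "i < CARD('n)"
  shows "\<exists>V\<in>F. vec.dim V = i"
proof (rule ccontr)
  assume nd: "\<not> (\<exists>V\<in>F. vec.dim V = i)"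
  have ch: "is_chain F" using F by (simp add: max_chains_def)
  have c: "chn F" using chain_chn[OF ch] .
  obtain x where x: "vec.subspace x" "vec.dim x = i" "lo F i \<subseteq> x" "x \<subseteq> hi F i"
  proof -
    have "\<exists>x. vec.subspace x \<and> vec.dim x = i \<and> lo F i \<subseteq> x \<and> x \<subseteq> hi F i"
      using mk_between[OF lo_subspace[of F i] hi_subspace[OF c, of i] lo_le_hi[OF c order_refl, of i]]
      lo_dim[OF c i(1)] hi_dim[OF c i(2)] by simp
    then show ?thesis using that by blast
  qed
  have cmp: "\<forall>V\<in>F. V \<subseteq> x \<or> x \<subseteq> V" using lo_hi_cmp[OF x(3,4)] nd by blast
  have "is_chain (insert x F)"
    using ch cmp x i unfolding is_chain_def sub_vertex_def by auto
  then have "insert x F = F" using F unfolding max_chains_def by blast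
  then show False using nd x by auto
qed

lemma at_dim_mem:
  fixes F :: "('k::{field,finite} ^ 'n) set set"
  assumes F: "F \<in> max_chains" and i: "0 < i" "i < CARD('n)"
  shows "at_dim F i \<in> F \<and> vec.dim (at_dim F i) = i"
proof -
  obtain V where "V \<in> F" "vec.dim V = i" using maxc_has_dim[OF assms] by blast
  moreover have "is_chain F" using F by (simp add: max_chains_def)
  ultimately show ?thesis using at_dim_eq'[of F V i] by simp
qed

lemma complete_max:
  fixes F :: "('k::{field,finite} ^ 'n) set set"
  assumes ch: "is_chain F" and cpl: "\<forall>i. 0 < i \<and> i < CARD('n) \<longrightarrow> (\<exists>V\<in>F. vec.dim V = i)"
  shows "F \<in> max_chains"
proof -
  have "G = F" if G: "is_chain G" "F \<subseteq> G" for G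
  proof -
    have "V \<in> F" if V: "V \<in> G" for V
    proof -
      have "0 < vec.dim V" "vec.dim V < CARD('n)" using G V unfolding is_chain_def sub_vertex_def by auto
      then obtain W where W: "W \<in> F" "vec.dim W = vec.dim V" using cpl by blast
      then have "W = V" using chain_unique[OF G(1), of W V] G V by auto
      then show ?thesis using W by simp
    qed
    then show ?thesis using G by auto
  qed
  then show ?thesis using ch unfolding max_chains_def by auto
qed

lemma ext_max:
  fixes T :: "('k::{field,finite} ^ 'n) set set"
  assumes "is_chain T"
  shows "\<exists>F\<in>max_chains. T \<subseteq> F"
proof -
  let ?A = "{G. is_chain G \<and> T \<subseteq> G}"
  have "finite ?A" by (rule finite_subset[OF subset_UNIV finite_class.finite_UNIV])
  moreover have "?A \<noteq> {}" using assms by auto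
  ultimately obtain m where m: "m \<in> ?A" "\<forall>b\<in>?A. m \<le> b \<longrightarrow> m = b"
    using finite_has_maximal[of ?A] by blast
  have "m \<in> max_chains" unfolding max_chains_def
  proof (intro CollectI conjI allI impI)
    show "is_chain m" using m(1) by simp
    fix G assume "is_chain G \<and> m \<subseteq> G"
    then show "G = m" using m by (metis (mono_tags, lifting) mem_Collect_eq order_trans)
  qed
  then show ?thesis using m(1) by auto
qed


definition Gs :: "('k::field ^ 'n) set set \<Rightarrow> ('k ^ 'n \<Rightarrow> 'k ^ 'n) set" where
  "Gs s = {h. lin h \<and> bij h \<and> (\<forall>V\<in>s. h ` V = V)}"

definition act :: "('k::field ^ 'n \<Rightarrow> 'k ^ 'n) \<Rightarrow> ('k ^ 'n) set set \<Rightarrow> ('k ^ 'n) set set" where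
  "act h F = (\<lambda>V. h ` V) ` F"

lemma inj_img: "inj h \<Longrightarrow> inj (image h)"
  using inj_on_image[of h UNIV] by (simp add: inj_on_subset)

lemma img_dim:
  fixes h :: "'k::field ^ 'n \<Rightarrow> 'k ^ 'n"
  assumes "lin h" "inj h"
  shows "vec.dim (h ` V) = vec.dim V"
  using vec.dim_image_eq[OF assms(1) inj_on_subset[OF assms(2) subset_UNIV]] .

lemma sub_vertex_img:
  fixes h :: "'k::field ^ 'n \<Rightarrow> 'k ^ 'n"
  assumes "lin h" "inj h" "sub_vertex V"
  shows "sub_vertex (h ` V)"
  using assms img_dim[OF assms(1,2)] vec.linear_subspace_image[OF assms(1)]
  unfolding sub_vertex_def by auto

lemma chain_img:
  fixes h :: "'k::field ^ 'n \<Rightarrow> 'k ^ 'n"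
  assumes "lin h" "inj h" "is_chain F"
  shows "is_chain (act h F)"
proof -
  have "\<forall>V\<in>act h F. sub_vertex V" using assms sub_vertex_img[OF assms(1,2)]
    unfolding is_chain_def act_def by auto
  moreover have "\<forall>U\<in>act h F. \<forall>V\<in>act h F. U \<subseteq> V \<or> V \<subseteq> U"
  proof (intro ballI)
    fix U V assume "U \<in> act h F" "V \<in> act h F"
    then obtain U' V' where "U = h ` U'" "V = h ` V'" "U' \<in> F" "V' \<in> F" unfolding act_def by auto
    then show "U \<subseteq> V \<or> V \<subseteq> U" using assms(3) unfolding is_chain_def by (metis image_mono)
  qed
  ultimately show ?thesis unfolding is_chain_def by blast
qed

lemma at_dim_act:
  fixes h :: "'k::{field,finite} ^ 'n \<Rightarrow> 'k ^ 'n"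
  assumes "lin h" "inj h" "F \<in> max_chains" "0 < i" "i < CARD('n)"
  shows "at_dim (act h F) i = h ` at_dim F i"
proof -
  have m: "at_dim F i \<in> F \<and> vec.dim (at_dim F i) = i" using at_dim_mem[OF assms(3-5)] .
  have ch: "is_chain (act h F)" using chain_img[OF assms(1,2)] assms(3) by (simp add: max_chains_def)
  show ?thesis using at_dim_eq'[OF ch, of "h ` at_dim F i" i] m img_dim[OF assms(1,2)]
    unfolding act_def by auto
qed

lemma maxc_img:
  fixes h :: "'k::{field,finite} ^ 'n \<Rightarrow> 'k ^ 'n"
  assumes "lin h" "inj h" "F \<in> max_chains"
  shows "act h F \<in> max_chains"
proof (rule complete_max)
  show "is_chain (act h F)" using chain_img[OF assms(1,2)] assms(3) by (simp add: max_chains_def)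
  show "\<forall>i. 0 < i \<and> i < CARD('n) \<longrightarrow> (\<exists>V\<in>act h F. vec.dim V = i)"
  proof (intro allI impI)
    fix i assume i: "0 < i \<and> i < CARD('n)"
    then have m: "at_dim F i \<in> F \<and> vec.dim (at_dim F i) = i" using at_dim_mem[OF assms(3)] by auto
    then show "\<exists>V\<in>act h F. vec.dim V = i" using img_dim[OF assms(1,2)] unfolding act_def by auto
  qed
qed

lemma Gs_lin: "h \<in> Gs s \<Longrightarrow> lin h" and Gs_inj: "h \<in> Gs s \<Longrightarrow> inj h"
  and Gs_fix: "h \<in> Gs s \<Longrightarrow> V \<in> s \<Longrightarrow> h ` V = V"
  unfolding Gs_def by (auto simp: bij_def)

lemma act_link:
  fixes h :: "'k::{field,finite} ^ 'n \<Rightarrow> 'k ^ 'n"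
  assumes "h \<in> Gs s" "F \<in> link_flags s"
  shows "act h F \<in> link_flags s"
proof -
  have "act h F \<in> max_chains" using maxc_img[OF Gs_lin[OF assms(1)] Gs_inj[OF assms(1)]] assms(2)
    by (simp add: link_flags_def)
  moreover have "s \<subseteq> act h F"
  proof
    fix V assume "V \<in> s"
    then have "V \<in> F" "h ` V = V" using assms Gs_fix[OF assms(1)] by (auto simp: link_flags_def)
    then show "V \<in> act h F" unfolding act_def using image_eqI[of V "\<lambda>V. h ` V" V F] by simp
  qed
  ultimately show ?thesis by (simp add: link_flags_def)
qed

lemma Gs_comp: "h \<in> Gs s \<Longrightarrow> k \<in> Gs s \<Longrightarrow> h \<circ> k \<in> Gs s"
proof -
  assume a: "h \<in> Gs s" "k \<in> Gs s"
  have "lin (h \<circ> k)" using a Vector_Spaces.linear_compose[of "(*s)" "(*s)" k "(*s)" h] unfolding Gs_def by simp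
  moreover have "bij (h \<circ> k)" using a bij_comp[of k h] unfolding Gs_def by simp
  moreover have "(h \<circ> k) ` V = V" if "V \<in> s" for V
  proof -
    have "(h \<circ> k) ` V = h ` (k ` V)" by (rule image_comp[symmetric])
    then show ?thesis using a that unfolding Gs_def by simp
  qed
  ultimately show ?thesis unfolding Gs_def by blast
qed

lemma act_comp: "act (h \<circ> k) F = act h (act k F)"
  unfolding act_def by (simp add: image_comp image_image)

lemma act_inj: "inj h \<Longrightarrow> inj (act h)"
proof -
  assume "inj h"
  then have "inj (image h)" by (rule inj_img)
  then have "inj (image (image h))" by (rule inj_img)
  then show "inj (act h)" unfolding act_def[abs_def] by simp
qed

lemma act_bij:
  fixes h :: "'k::{field,finite} ^ 'n \<Rightarrow> 'k ^ 'n"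
  assumes "h \<in> Gs s"
  shows "bij_betw (act h) (link_flags s) (link_flags s)"
proof -
  have fin: "finite (link_flags s)" by (rule finite_subset[OF subset_UNIV finite_class.finite_UNIV])
  have inj: "inj_on (act h) (link_flags s)" by (rule inj_on_subset[OF act_inj[OF Gs_inj[OF assms]] subset_UNIV])
  have sub: "act h ` link_flags s \<subseteq> link_flags s" using act_link[OF assms] by auto
  have "card (act h ` link_flags s) = card (link_flags s)" using card_image[OF inj] .
  then have "act h ` link_flags s = link_flags s" using card_subset_eq[OF fin sub] by simp
  then show ?thesis using inj by (simp add: bij_betw_def)
qed


definition Fl :: "('k::field ^ 'n) set set \<Rightarrow> nat \<Rightarrow> ('k ^ 'n) set" where
  "Fl F i = (if i = 0 then {0} else if i < CARD('n) then at_dim F i else UNIV)"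

lemma Fl_pos: "0 < i \<Longrightarrow> i < CARD('n) \<Longrightarrow> Fl (F :: ('k::field ^ 'n) set set) i = at_dim F i"
  by (simp add: Fl_def)

lemma Fl_props:
  fixes F :: "('k::{field,finite} ^ 'n) set set"
  assumes F: "F \<in> max_chains" and i: "i \<le> CARD('n)"
  shows "vec.subspace (Fl F i) \<and> vec.dim (Fl F i) = i"
proof -
  consider "i = 0" | "0 < i" "i < CARD('n)" | "i = CARD('n)" "i \<noteq> 0" using i by linarith
  then show ?thesis
  proof cases
    case 1 then show ?thesis by (simp add: Fl_def vec.subspace_single_0)
  next
    case 2
    then have "at_dim F i \<in> F \<and> vec.dim (at_dim F i) = i" using at_dim_mem[OF F] by auto
    moreover have "is_chain F" using F by (simp add: max_chains_def)
    ultimately show ?thesis using 2 by (simp add: Fl_def is_chain_def sub_vertex_def)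
  next
    case 3 then show ?thesis by (simp add: Fl_def card_cart_basis)
  qed
qed

lemma Fl_mono:
  fixes F :: "('k::{field,finite} ^ 'n) set set"
  assumes F: "F \<in> max_chains" and ij: "i \<le> j" "j \<le> CARD('n)"
  shows "Fl F i \<subseteq> Fl F j"
proof -
  have ch: "is_chain F" using F by (simp add: max_chains_def)
  consider "i = 0" | "j = CARD('n)" | "0 < i" "j < CARD('n)" using ij by linarith
  then show ?thesis
  proof cases
    case 1
    have "0 \<in> Fl F j" using vec.subspace_0 Fl_props[OF F ij(2)] by blast
    then show ?thesis using 1 by (simp add: Fl_def[of F 0])
  next
    case 2 then show ?thesis by (simp add: Fl_def)
  next
    case 3
    then have a: "at_dim F i \<in> F \<and> vec.dim (at_dim F i) = i" "at_dim F j \<in> F \<and> vec.dim (at_dim F j) = j"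
      using at_dim_mem[OF F] ij by auto
    show ?thesis
    proof (cases "i = j")
      case True then show ?thesis by simp
    next
      case False
      then have "at_dim F i \<subseteq> at_dim F j" using a ch ij unfolding is_chain_def
        by (intro cmp_dim_sub) auto
      then show ?thesis using 3 ij by (simp add: Fl_def)
    qed
  qed
qed

definition bv :: "('k::field ^ 'n) set set \<Rightarrow> nat \<Rightarrow> 'k ^ 'n" where
  "bv F i = (SOME x. x \<in> Fl F (Suc i) \<and> x \<notin> Fl F i)"

lemma bv_props:
  fixes F :: "('k::{field,finite} ^ 'n) set set"
  assumes F: "F \<in> max_chains" and i: "i < CARD('n)"
  shows "bv F i \<in> Fl F (Suc i) \<and> bv F i \<notin> Fl F i"
proof -
  have "Fl F i \<noteq> Fl F (Suc i)" using Fl_props[OF F, of i] Fl_props[OF F, of "Suc i"] i by auto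
  moreover have "Fl F i \<subseteq> Fl F (Suc i)" using Fl_mono[OF F, of i "Suc i"] i by auto
  ultimately have "\<exists>x. x \<in> Fl F (Suc i) \<and> x \<notin> Fl F i" by blast
  then show ?thesis unfolding bv_def by (rule someI_ex)
qed

lemma bv_span:
  fixes F :: "('k::{field,finite} ^ 'n) set set"
  assumes F: "F \<in> max_chains"
  shows "i \<le> CARD('n) \<Longrightarrow> vec.span (bv F ` {..<i}) = Fl F i \<and> vec.independent (bv F ` {..<i})
     \<and> inj_on (bv F) {..<i}"
proof (induction i)
  case 0
  have "bv F ` {..<0} = {}" by simp
  moreover have "Fl F 0 = {0}" by (simp add: Fl_def)
  ultimately show ?case using vec.independent_empty by simp
next
  case (Suc i)
  have il: "i \<le> CARD('n)" "i < CARD('n)" using Suc.prems by simp_all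
  note IH0 = Suc.IH[OF il(1)]
  have IH: "vec.span (bv F ` {..<i}) = Fl F i" "vec.independent (bv F ` {..<i})"
    "inj_on (bv F) {..<i}" using IH0 by blast+
  note bi = conjunct1[OF bv_props[OF F il(2)]] conjunct2[OF bv_props[OF F il(2)]]
  have ns: "bv F i \<notin> vec.span (bv F ` {..<i})" unfolding IH(1) by (rule bi(2))
  have e: "bv F ` {..<Suc i} = insert (bv F i) (bv F ` {..<i})" by (simp add: lessThan_Suc)
  have ind: "vec.independent (bv F ` {..<Suc i})" unfolding e by (rule vec.independent_insertI[OF ns IH(2)])
  have ss: "bv F ` {..<i} \<subseteq> vec.span (bv F ` {..<i})" by (rule vec.span_superset)
  have nin: "bv F i \<notin> bv F ` {..<i}" using ns ss by blast
  have "inj_on (bv F) (insert i {..<i})" using IH(3) nin by (simp add: inj_on_insert)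
  then have inj: "inj_on (bv F) {..<Suc i}" by (simp add: lessThan_Suc)
  have sub: "vec.span (bv F ` {..<Suc i}) \<subseteq> Fl F (Suc i)"
  proof (rule vec.span_minimal)
    show "vec.subspace (Fl F (Suc i))" using Fl_props[OF F Suc.prems] by simp
    show "bv F ` {..<Suc i} \<subseteq> Fl F (Suc i)"
    proof
      fix x assume "x \<in> bv F ` {..<Suc i}"
      then obtain j where j: "j < Suc i" "x = bv F j" by auto
      have "bv F j \<in> Fl F (Suc j)" using bv_props[OF F, of j] j Suc.prems by auto
      moreover have "Fl F (Suc j) \<subseteq> Fl F (Suc i)" using Fl_mono[OF F, of "Suc j" "Suc i"] j Suc.prems by auto
      ultimately show "x \<in> Fl F (Suc i)" using j by auto
    qed
  qed
  have d0: "vec.dim (bv F ` {..<i}) = i"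
    using Fl_props[OF F, of i] Suc.prems IH(1) vec.dim_span[of "bv F ` {..<i}"] by simp
  have d1: "vec.dim (insert (bv F i) (bv F ` {..<i})) = Suc i"
    using vec.dim_insert[of "bv F i" "bv F ` {..<i}"] ns d0 by simp
  have "vec.dim (vec.span (bv F ` {..<Suc i})) = Suc i"
    unfolding e vec.dim_span using d1 .
  moreover have "vec.dim (Fl F (Suc i)) = Suc i" using Fl_props[OF F Suc.prems] by simp
  ultimately have "vec.span (bv F ` {..<Suc i}) = Fl F (Suc i)"
    using sub_eq_dim[OF vec.subspace_span _ sub] Fl_props[OF F Suc.prems] by simp
  then show ?case using ind inj by simp
qed

lemma trans_max:
  fixes F F' :: "('k::{field,finite} ^ 'n) set set"
  assumes F: "F \<in> max_chains" and F': "F' \<in> max_chains"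
  shows "\<exists>h. lin h \<and> bij h \<and> (\<forall>i\<le>CARD('n). h ` Fl F i = Fl F' i)"
proof -
  let ?n = "CARD('n)"
  let ?B = "bv F ` {..<?n}"
  define h where "h = vec.construct ?B (\<lambda>x. bv F' (the_inv_into {..<?n} (bv F) x))"
  have P: "vec.span ?B = Fl F ?n" "vec.independent ?B" "inj_on (bv F) {..<?n}"
    using bv_span[OF F, of ?n] by auto
  have lh: "lin h" unfolding h_def by (rule vec.linear_construct[OF P(2)])
  have hb: "h (bv F j) = bv F' j" if "j < ?n" for j
  proof -
    have mem: "bv F j \<in> ?B" using that by simp
    have "h (bv F j) = bv F' (the_inv_into {..<?n} (bv F) (bv F j))"
      unfolding h_def by (rule vec.construct_basis[OF P(2) mem])
    then show ?thesis using that the_inv_into_f_f[OF P(3)] by simp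
  qed
  have img: "h ` Fl F i = Fl F' i" if i: "i \<le> ?n" for i
  proof -
    have "h ` Fl F i = h ` vec.span (bv F ` {..<i})" using bv_span[OF F i] by simp
    also have "\<dots> = vec.span (h ` bv F ` {..<i})" using vec.linear_span_image[OF lh] by simp
    also have "h ` bv F ` {..<i} = bv F' ` {..<i}"
      using hb i by (force simp: image_image intro!: image_cong)
    also have "vec.span (bv F' ` {..<i}) = Fl F' i" using bv_span[OF F' i] by simp
    finally show ?thesis .
  qed
  have "surj h" using img[of ?n] by (simp add: Fl_def)
  then have "bij h" using vec.linear_surj_imp_inj[OF lh] by (simp add: bij_def)
  then show ?thesis using lh img by blast
qed

lemma Fl_at:
  fixes F :: "('k::{field,finite} ^ 'n) set set"
  assumes F: "F \<in> max_chains" and V: "V \<in> F"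
  shows "Fl F (vec.dim V) = V" "0 < vec.dim V" "vec.dim V < CARD('n)"
proof -
  have ch: "is_chain F" using F by (simp add: max_chains_def)
  show d: "0 < vec.dim V" "vec.dim V < CARD('n)" using ch V by (auto simp: is_chain_def sub_vertex_def)
  show "Fl F (vec.dim V) = V" using at_dim_eq[OF ch V] Fl_pos[OF d, of F] by simp
qed

lemma transitive:
  fixes F F' :: "('k::{field,finite} ^ 'n) set set"
  assumes F: "F \<in> link_flags s" and F': "F' \<in> link_flags s"
  shows "\<exists>h\<in>Gs s. act h F = F'"
proof -
  have m: "F \<in> max_chains" "F' \<in> max_chains" "s \<subseteq> F" "s \<subseteq> F'" using F F' by (auto simp: link_flags_def)
  obtain h where h: "lin h" "bij h" "\<forall>i\<le>CARD('n). h ` Fl F i = Fl F' i" using trans_max[OF m(1,2)] by blast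
  have imgV: "h ` V = Fl F' (vec.dim V)" if "V \<in> F" for V
    using h(3) Fl_at[OF m(1) that] by (metis less_imp_le)
  have dimV: "vec.dim (h ` V) = vec.dim V" for V using img_dim[OF h(1)] h(2) by (simp add: bij_def)
  have "act h F = F'"
  proof
    show "act h F \<subseteq> F'"
    proof
      fix W assume "W \<in> act h F"
      then obtain V where V: "V \<in> F" "W = h ` V" by (auto simp: act_def)
      have d: "0 < vec.dim V" "vec.dim V < CARD('n)" using Fl_at[OF m(1) V(1)] by auto
      then show "W \<in> F'" using imgV[OF V(1)] V(2) at_dim_mem[OF m(2) d] Fl_pos[OF d, of F']
        by simp
    qed
    show "F' \<subseteq> act h F"
    proof
      fix W assume W: "W \<in> F'"
      let ?V = "Fl F (vec.dim W)"
      have d: "0 < vec.dim W" "vec.dim W < CARD('n)" using Fl_at[OF m(2) W] by auto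
      have "?V \<in> F" using at_dim_mem[OF m(1) d] Fl_pos[OF d, of F] by simp
      moreover have "h ` ?V = W" using h(3) d Fl_at[OF m(2) W] by simp
      ultimately show "W \<in> act h F" unfolding act_def by (metis image_eqI)
    qed
  qed
  moreover have "h \<in> Gs s"
  proof -
    have "h ` V = V" if V: "V \<in> s" for V
      using imgV[of V] V m Fl_at[OF m(2), of V] by auto
    then show ?thesis using h unfolding Gs_def by auto
  qed
  ultimately show ?thesis by blast
qed


locale lk =
  fixes s :: "('k::{field,finite} ^ 'n) set set" and i0 i1 i2 :: nat
  assumes d3: "CARD('n) \<ge> 3"
    and rng: "1 \<le> i0" "i0 < i1" "i1 < i2" "i2 \<le> CARD('n) - 1"
    and sc: "is_chain s" and sd: "\<forall>V\<in>s. vec.dim V \<notin> {i0, i1, i2}"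
    and cond1: "2 * i0 \<le> i1 \<or> (\<exists>V\<in>s. i0 < vec.dim V \<and> vec.dim V < i1)"
    and cond2: "2 * i1 - i0 \<le> i2
       \<or> (\<exists>V\<in>s. i0 < vec.dim V \<and> vec.dim V < i1 \<and> 2 * i1 - vec.dim V \<le> i2)
       \<or> (\<exists>W\<in>s. i1 < vec.dim W \<and> vec.dim W < i2)"
begin

definition vx :: "nat \<Rightarrow> ('k ^ 'n) set \<Rightarrow> bool" where
  "vx k x \<longleftrightarrow> vec.subspace x \<and> vec.dim x = k \<and> lo s k \<subseteq> x \<and> x \<subseteq> hi s k"

abbreviation "II \<equiv> {i0, i1, i2}"

lemma i2n: "i2 < CARD('n)" using rng d3 by linarith

lemma cs: "chn s" using chain_chn[OF sc] .

lemma s_sub: "V \<in> s \<Longrightarrow> vec.subspace V" using sc by (auto simp: is_chain_def sub_vertex_def)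

lemma s_cmp: "U \<in> s \<Longrightarrow> V \<in> s \<Longrightarrow> U \<subseteq> V \<or> V \<subseteq> U" using sc by (auto simp: is_chain_def)

lemma vx_cmp: "k \<in> II \<Longrightarrow> vx k x \<Longrightarrow> V \<in> s \<Longrightarrow> V \<subseteq> x \<or> x \<subseteq> V"
  unfolding vx_def using lo_hi_cmp[of s k x V] sd by auto

lemma vx_lt: "k \<in> II \<Longrightarrow> vx k x \<Longrightarrow> V \<in> s \<Longrightarrow> vec.dim V < k \<Longrightarrow> V \<subseteq> x"
  unfolding vx_def using lo_sub[of V s k] by auto

lemma vx_gt: "k \<in> II \<Longrightarrow> vx k x \<Longrightarrow> V \<in> s \<Longrightarrow> k < vec.dim V \<Longrightarrow> x \<subseteq> V"
  unfolding vx_def using hi_sub[of V s k] by auto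

lemma vx_sv: "k \<in> II \<Longrightarrow> vx k x \<Longrightarrow> sub_vertex x"
  unfolding vx_def sub_vertex_def using rng i2n by auto

lemma cmp_vx:
  assumes "k \<in> II" "vec.subspace x" "vec.dim x = k" "\<forall>V\<in>s. V \<subseteq> x \<or> x \<subseteq> V"
  shows "vx k x"
  using cmp_lo_hi[OF cs assms(2,3)] assms sd unfolding vx_def by auto

lemma vx_dim: "vx k x \<Longrightarrow> vec.dim x = k" and vx_subspace: "vx k x \<Longrightarrow> vec.subspace x"
  unfolding vx_def by auto

lemma vx_incl: "i \<in> II \<Longrightarrow> j \<in> II \<Longrightarrow> vx i x \<Longrightarrow> vx j y \<Longrightarrow> i < j \<Longrightarrow> x \<subseteq> y \<or> y \<subseteq> x \<Longrightarrow> x \<subseteq> y"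
  using cmp_dim_sub[of x y] vx_dim by auto

lemma chain_ext:
  assumes "\<forall>x\<in>T. \<exists>k\<in>II. vx k x" "\<forall>x\<in>T. \<forall>y\<in>T. x \<subseteq> y \<or> y \<subseteq> x"
  shows "is_chain (s \<union> T)"
  unfolding is_chain_def
proof (intro conjI ballI)
  fix V assume "V \<in> s \<union> T"
  then consider "V \<in> s" | "V \<in> T" by blast
  then show "sub_vertex V"
  proof cases
    case 1 then show ?thesis using sc unfolding is_chain_def by blast
  next
    case 2 then obtain k where "k \<in> II" "vx k V" using assms(1) by blast
    then show ?thesis by (rule vx_sv)
  qed
next
  fix U V assume UV: "U \<in> s \<union> T" "V \<in> s \<union> T"
  show "U \<subseteq> V \<or> V \<subseteq> U"
  proof (cases "U \<in> s")
    case Us: True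
    show ?thesis
    proof (cases "V \<in> s")
      case True then show ?thesis using s_cmp Us by blast
    next
      case False
      then obtain k where "k \<in> II" "vx k V" using assms(1) UV by blast
      then show ?thesis using vx_cmp[of k V U] Us by blast
    qed
  next
    case Un: False
    then obtain k where k: "k \<in> II" "vx k U" using assms(1) UV by blast
    show ?thesis
    proof (cases "V \<in> s")
      case True then show ?thesis using vx_cmp[OF k, of V] by blast
    next
      case False then show ?thesis using assms(2) UV Un by blast
    qed
  qed
qed

lemma link_edge_of:
  assumes "i \<in> II" "j \<in> II" "i < j" "vx i x" "vx j y" "x \<subseteq> y"
  shows "link_edge s II x y" "link_edge s II y x"
proof -
  have ne: "x \<noteq> y" using vx_dim[OF assms(4)] vx_dim[OF assms(5)] assms(3) by auto
  have ch: "is_chain (s \<union> {x, y})" using assms by (intro chain_ext) auto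
  have "\<forall>V\<in>{x,y}. vec.dim V \<in> II" using assms vx_dim by auto
  then show "link_edge s II x y" "link_edge s II y x" using ne ch
    unfolding link_edge_def link_face_def by (auto simp: insert_commute)
qed

lemma link_tri_of:
  assumes "vx i0 a" "vx i1 b" "vx i2 c" "a \<subseteq> b" "b \<subseteq> c"
  shows "link_triangle s II a b c"
proof -
  have ne: "a \<noteq> b" "b \<noteq> c" "a \<noteq> c" using vx_dim[OF assms(1)] vx_dim[OF assms(2)] vx_dim[OF assms(3)] rng by auto
  have ch: "is_chain (s \<union> {a, b, c})" using assms by (intro chain_ext) auto
  have "\<forall>V\<in>{a,b,c}. vec.dim V \<in> II" using assms vx_dim by auto
  then show ?thesis using ne ch unfolding link_triangle_def link_face_def by auto
qed

lemma link_edge_cases: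
  assumes "link_edge s II u v"
  shows "\<exists>i j. i \<in> II \<and> j \<in> II \<and> i < j \<and>
     ((vx i u \<and> vx j v \<and> u \<subseteq> v) \<or> (vx i v \<and> vx j u \<and> v \<subseteq> u))"
proof -
  have ne: "u \<noteq> v" and dI: "vec.dim u \<in> II" "vec.dim v \<in> II" and ch: "is_chain (s \<union> {u, v})"
    using assms unfolding link_edge_def link_face_def by auto
  have cu: "\<forall>V\<in>s. V \<subseteq> u \<or> u \<subseteq> V" "\<forall>V\<in>s. V \<subseteq> v \<or> v \<subseteq> V" "u \<subseteq> v \<or> v \<subseteq> u"
    and su: "sub_vertex u" "sub_vertex v"
    using ch unfolding is_chain_def by auto
  have vu: "vx (vec.dim u) u" "vx (vec.dim v) v"
    using cmp_vx[OF dI(1)] cmp_vx[OF dI(2)] cu su by (auto simp: sub_vertex_def)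
  have "vec.dim u \<noteq> vec.dim v"
    using sub_eq_dim[of u v] sub_eq_dim[of v u] cu(3) su ne by (auto simp: sub_vertex_def)
  then consider "vec.dim u < vec.dim v" | "vec.dim v < vec.dim u" by linarith
  then show ?thesis
  proof cases
    case 1
    then have "u \<subseteq> v" using cmp_dim_sub cu(3) by blast
    then show ?thesis using 1 vu dI by blast
  next
    case 2
    then have "v \<subseteq> u" using cmp_dim_sub cu(3) by blast
    then show ?thesis using 2 vu dI by blast
  qed
qed

lemma flag_tri:
  assumes F: "F \<in> link_flags s"
  shows "vx i0 (at_dim F i0) \<and> vx i1 (at_dim F i1) \<and> vx i2 (at_dim F i2) \<and>
    at_dim F i0 \<subseteq> at_dim F i1 \<and> at_dim F i1 \<subseteq> at_dim F i2"
proof -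
  have m: "F \<in> max_chains" "s \<subseteq> F" using F by (auto simp: link_flags_def)
  have ch: "is_chain F" using m by (simp add: max_chains_def)
  have mem: "at_dim F k \<in> F \<and> vec.dim (at_dim F k) = k" if "k \<in> II" for k
    using at_dim_mem[OF m(1)] that rng i2n by auto
  have v: "vx k (at_dim F k)" if k: "k \<in> II" for k
  proof (rule cmp_vx[OF k])
    show "vec.subspace (at_dim F k)" "vec.dim (at_dim F k) = k"
      using mem[OF k] ch by (auto simp: is_chain_def sub_vertex_def)
    show "\<forall>V\<in>s. V \<subseteq> at_dim F k \<or> at_dim F k \<subseteq> V"
    proof
      fix V assume "V \<in> s"
      then have "V \<in> F" using m(2) by blast
      then show "V \<subseteq> at_dim F k \<or> at_dim F k \<subseteq> V" using mem[OF k] ch unfolding is_chain_def by blast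
    qed
  qed
  have inc: "at_dim F i \<subseteq> at_dim F j" if "i \<in> II" "j \<in> II" "i < j" for i j
    using vx_incl[OF that(1,2) v[OF that(1)] v[OF that(2)] that(3)] mem[OF that(1)] mem[OF that(2)] ch
    unfolding is_chain_def by blast
  show ?thesis using v inc rng by auto
qed

lemma tri_flag:
  assumes "vx i0 a" "vx i1 b" "vx i2 c" "a \<subseteq> b" "b \<subseteq> c"
  shows "\<exists>F\<in>link_flags s. at_dim F i0 = a \<and> at_dim F i1 = b \<and> at_dim F i2 = c"
proof -
  have ch: "is_chain (s \<union> {a, b, c})" using assms by (intro chain_ext) auto
  obtain F where F: "F \<in> max_chains" "s \<union> {a,b,c} \<subseteq> F" using ext_max[OF ch] by blast
  have chF: "is_chain F" using F by (simp add: max_chains_def)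
  have "at_dim F i0 = a" "at_dim F i1 = b" "at_dim F i2 = c"
    using at_dim_eq'[OF chF] F assms vx_dim by auto
  moreover have "F \<in> link_flags s" using F by (simp add: link_flags_def)
  ultimately show ?thesis by blast
qed

lemma vx_img:
  assumes h: "h \<in> Gs s" and k: "k \<in> II" and x: "vx k x"
  shows "vx k (h ` x)"
proof (rule cmp_vx[OF k])
  show "vec.subspace (h ` x)" using vec.linear_subspace_image[OF Gs_lin[OF h] vx_subspace[OF x]] .
  show "vec.dim (h ` x) = k" using img_dim[OF Gs_lin[OF h] Gs_inj[OF h]] vx_dim[OF x] by simp
  show "\<forall>V\<in>s. V \<subseteq> h ` x \<or> h ` x \<subseteq> V"
  proof
    fix V assume V: "V \<in> s"
    have "V \<subseteq> x \<or> x \<subseteq> V" using vx_cmp[OF k x V] .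
    then have "h ` V \<subseteq> h ` x \<or> h ` x \<subseteq> h ` V" by (auto intro: image_mono)
    then show "V \<subseteq> h ` x \<or> h ` x \<subseteq> V" using Gs_fix[OF h V] by simp
  qed
qed

end

context lk begin

lemma vx_hi:
  assumes "i \<in> II" "vx i x" "i \<le> k"
  shows "x \<subseteq> hi s k"
  unfolding hi_def
proof (rule Inter_greatest)
  fix V assume "V \<in> {V \<in> s. k < vec.dim V}"
  then show "x \<subseteq> V" using vx_gt[OF assms(1,2), of V] assms(3) by simp
qed

lemma vx_lo:
  assumes "i \<in> II" "vx i x" "k \<le> i"
  shows "lo s k \<subseteq> x"
  unfolding lo_def
proof (intro vec.span_minimal Union_least)
  show "vec.subspace x" using vx_subspace[OF assms(2)] .
  fix V assume "V \<in> {V \<in> s. vec.dim V < k}"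
  then show "V \<subseteq> x" using vx_lt[OF assms(1,2), of V] assms(3) by simp
qed

lemma mk_vx:
  assumes k: "k \<in> II" and X: "vec.subspace X" "vec.subspace Y" "lo s k \<subseteq> X" "X \<subseteq> Y" "Y \<subseteq> hi s k"
    "vec.dim X \<le> k" "k \<le> vec.dim Y"
  shows "\<exists>y. vx k y \<and> X \<subseteq> y \<and> y \<subseteq> Y"
proof -
  obtain y where y: "vec.subspace y" "vec.dim y = k" "X \<subseteq> y" "y \<subseteq> Y"
    using mk_between[OF X(1,2,4,6,7)] by blast
  then have "vx k y" using X unfolding vx_def by auto
  then show ?thesis using y by blast
qed

lemma ex_vx: "k \<in> II \<Longrightarrow> \<exists>x. vx k x"
proof -
  assume k: "k \<in> II"
  have k0: "0 < k" "k < CARD('n)" using k rng i2n by auto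
  show ?thesis
    using mk_vx[OF k lo_subspace hi_subspace[OF cs] order_refl lo_le_hi[OF cs order_refl]]
      lo_dim[OF cs k0(1)] hi_dim[OF cs k0(2)] by fastforce
qed

lemma down:
  assumes k: "k \<in> II" and j: "j \<in> II" and kj: "k < j" and x: "vx j x"
  shows "\<exists>y. vx k y \<and> y \<subseteq> x"
proof -
  have k0: "0 < k" using k rng by auto
  have lx: "lo s k \<subseteq> x" using vx_lo[OF j x] kj by simp
  have sB: "vec.subspace (x \<inter> hi s k)" using vx_subspace[OF x] hi_subspace[OF cs] by (rule vec.subspace_inter)
  have dB: "k \<le> vec.dim (x \<inter> hi s k)"
  proof -
    consider "hi s k = UNIV" | "hi s k \<in> s" "k < vec.dim (hi s k)" using hi_cases[OF cs, of k] by blast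
    then show ?thesis
    proof cases
      case 1 then show ?thesis using vx_dim[OF x] kj by simp
    next
      case 2
      have "vec.dim (hi s k) \<noteq> j" using sd 2 j by auto
      then consider "vec.dim (hi s k) < j" | "j < vec.dim (hi s k)" by linarith
      then show ?thesis
      proof cases
        case 1
        then have "hi s k \<subseteq> x" using vx_lt[OF j x 2(1)] by simp
        then show ?thesis using 2 by (simp add: Int_absorb1)
      next
        case 3: 2
        then have "x \<subseteq> hi s k" using vx_gt[OF j x 2(1)] by simp
        then show ?thesis using vx_dim[OF x] kj by (simp add: Int_absorb2)
      qed
    qed
  qed
  show ?thesis
    using mk_vx[OF k lo_subspace sB, of ] lx lo_le_hi[OF cs order_refl, of k] lo_dim[OF cs k0] dB
    by fastforce
qed

lemma pair_in_b:
  assumes a: "vx i0 a" and a': "vx i0 a'" and b: "vx i1 b" and X: "vec.subspace X"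
    and sub: "a \<subseteq> X" "a' \<subseteq> X" "b \<subseteq> X"
  shows "\<exists>b'. vx i1 b' \<and> a \<subseteq> b' \<and> a' \<subseteq> b' \<and> b' \<subseteq> X"
proof -
  let ?A = "vec.span (lo s i1 \<union> (a \<union> a'))"
  let ?B = "X \<inter> hi s i1"
  have I0: "i0 \<in> II" and I1: "i1 \<in> II" by auto
  have sB: "vec.subspace ?B" using X hi_subspace[OF cs] by (rule vec.subspace_inter)
  have lb: "lo s i1 \<subseteq> b" using b unfolding vx_def by auto
  have bh: "b \<subseteq> hi s i1" using b unfolding vx_def by auto
  have AB: "?A \<subseteq> ?B"
  proof (rule vec.span_minimal[OF _ sB])
    show "lo s i1 \<union> (a \<union> a') \<subseteq> ?B"
      using lb sub lo_le_hi[OF cs order_refl, of i1] vx_hi[OF I0 a, of i1] vx_hi[OF I0 a', of i1] rng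
      by auto
  qed
  have dB: "i1 \<le> vec.dim ?B"
  proof -
    have "b \<subseteq> ?B" using sub bh by auto
    then show ?thesis using vec.dim_subset[of b ?B] vx_dim[OF b] by simp
  qed
  have dA: "vec.dim ?A \<le> i1"
  proof (cases "\<exists>V\<in>s. i0 < vec.dim V \<and> vec.dim V < i1")
    case True
    then obtain V where V: "V \<in> s" "i0 < vec.dim V" "vec.dim V < i1" by blast
    have "a \<subseteq> V" "a' \<subseteq> V" using vx_gt[OF I0 a V(1)] vx_gt[OF I0 a' V(1)] V by auto
    moreover have "V \<subseteq> lo s i1" using lo_sub[OF V(1,3)] .
    ultimately have "?A \<subseteq> lo s i1" by (intro vec.span_minimal lo_subspace) auto
    then have "vec.dim ?A \<le> vec.dim (lo s i1)" by (rule vec.dim_subset)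
    then show ?thesis using lo_dim[OF cs, of i1] rng by simp
  next
    case False
    then have c: "2 * i0 \<le> i1" using cond1 by blast
    have "lo s i1 \<subseteq> a" unfolding lo_def
    proof (intro vec.span_minimal vx_subspace[OF a] Union_least)
      fix V assume V: "V \<in> {V \<in> s. vec.dim V < i1}"
      then have "vec.dim V \<noteq> i0" using sd by auto
      then have "vec.dim V < i0" using V False by fastforce
      then show "V \<subseteq> a" using vx_lt[OF I0 a] V by blast
    qed
    then have "?A \<subseteq> vec.span (a \<union> a')"
      by (intro vec.span_minimal vec.subspace_span) (auto intro: vec.span_base)
    then have "vec.dim ?A \<le> vec.dim (vec.span (a \<union> a'))" by (rule vec.dim_subset)
    also have "\<dots> \<le> vec.dim a + vec.dim a'"
      by (rule dim_span_union_le[OF vx_subspace[OF a] vx_subspace[OF a']])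
    finally show ?thesis using vx_dim[OF a] vx_dim[OF a'] c by simp
  qed
  have lA: "lo s i1 \<subseteq> ?A" by (meson Un_subset_iff vec.span_superset)
  obtain y where y: "vx i1 y" "?A \<subseteq> y" "y \<subseteq> ?B"
    using mk_vx[OF I1 vec.subspace_span sB lA AB Int_lower2 dA dB] by auto
  have "a \<union> a' \<subseteq> ?A" by (meson Un_subset_iff vec.span_superset)
  then show ?thesis using y by blast
qed

lemma pair_in_c:
  assumes a: "vx i0 a" and b: "vx i1 b" and b': "vx i1 b'" and ab: "a \<subseteq> b" "a \<subseteq> b'"
  shows "\<exists>c. vx i2 c \<and> b \<subseteq> c \<and> b' \<subseteq> c"
proof -
  let ?A = "vec.span (lo s i2 \<union> (b \<union> b'))"
  let ?B = "hi s i2"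
  have I0: "i0 \<in> II" and I1: "i1 \<in> II" and I2: "i2 \<in> II" by auto
  have sB: "vec.subspace ?B" using hi_subspace[OF cs] .
  have AB: "?A \<subseteq> ?B"
  proof (rule vec.span_minimal[OF _ sB])
    show "lo s i2 \<union> (b \<union> b') \<subseteq> ?B"
      using lo_le_hi[OF cs order_refl, of i2] vx_hi[OF I1 b, of i2] vx_hi[OF I1 b', of i2] rng
      by auto
  qed
  have dB: "i2 \<le> vec.dim ?B" using hi_dim[OF cs i2n] by simp
  have dA: "vec.dim ?A \<le> i2"
  proof (cases "\<exists>W\<in>s. i1 < vec.dim W \<and> vec.dim W < i2")
    case True
    then obtain V where V: "V \<in> s" "i1 < vec.dim V" "vec.dim V < i2" by blast
    have "b \<subseteq> V" "b' \<subseteq> V" using vx_gt[OF I1 b V(1)] vx_gt[OF I1 b' V(1)] V by auto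
    moreover have "V \<subseteq> lo s i2" using lo_sub[OF V(1,3)] .
    ultimately have "?A \<subseteq> lo s i2" by (intro vec.span_minimal lo_subspace) auto
    then have "vec.dim ?A \<le> vec.dim (lo s i2)" by (rule vec.dim_subset)
    then show ?thesis using lo_dim[OF cs, of i2] rng by simp
  next
    case False
    have "lo s i2 \<subseteq> b" unfolding lo_def
    proof (intro vec.span_minimal vx_subspace[OF b] Union_least)
      fix V assume V: "V \<in> {V \<in> s. vec.dim V < i2}"
      then have "vec.dim V \<noteq> i1" using sd by auto
      then have "vec.dim V < i1" using V False by fastforce
      then show "V \<subseteq> b" using vx_lt[OF I1 b] V by blast
    qed
    then have "?A \<subseteq> vec.span (b \<union> b')"
      by (intro vec.span_minimal vec.subspace_span) (auto intro: vec.span_base)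
    then have d1: "vec.dim ?A \<le> vec.dim (vec.span (b \<union> b'))" by (rule vec.dim_subset)
    have d2: "vec.dim (vec.span (b \<union> b')) + vec.dim (b \<inter> b') = i1 + i1"
      using dim_span_union[OF vx_subspace[OF b] vx_subspace[OF b']] vx_dim[OF b] vx_dim[OF b'] by simp
    have "\<exists>m. m \<le> vec.dim (b \<inter> b') \<and> 2 * i1 - m \<le> i2"
    proof (cases "2 * i1 - i0 \<le> i2")
      case True
      have "vec.dim a \<le> vec.dim (b \<inter> b')" using ab by (intro vec.dim_subset) auto
      then show ?thesis using True vx_dim[OF a] by blast
    next
      case F2: False
      then obtain V where V: "V \<in> s" "i0 < vec.dim V" "vec.dim V < i1" "2 * i1 - vec.dim V \<le> i2"
        using cond2 False by blast
      have "V \<subseteq> b" "V \<subseteq> b'" using vx_lt[OF I1 b V(1)] vx_lt[OF I1 b' V(1)] V by auto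
      then have "vec.dim V \<le> vec.dim (b \<inter> b')" by (intro vec.dim_subset) auto
      then show ?thesis using V by blast
    qed
    then obtain m where m: "m \<le> vec.dim (b \<inter> b')" "2 * i1 - m \<le> i2" by blast
    show ?thesis using d1 d2 m by linarith
  qed
  have lA: "lo s i2 \<subseteq> ?A" by (meson Un_subset_iff vec.span_superset)
  obtain y where y: "vx i2 y" "?A \<subseteq> y" "y \<subseteq> ?B"
    using mk_vx[OF I2 vec.subspace_span sB lA AB order_refl dA dB] by auto
  have "b \<union> b' \<subseteq> ?A" by (meson Un_subset_iff vec.span_superset)
  then show ?thesis using y by blast
qed

end

lemma grp3:
  fixes x y z :: "'g::group_add"
  assumes h: "x + y + z = 0"
  shows "-z = x + y" "x = -z + -y" "y = -x + -z" "z = -y + -x" "-x = y + z" "-y = z + x"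
proof -
  have h': "x + (y + z) = 0" using h by (simp add: add.assoc)
  have "x + y = -z" using h by (simp only: eq_neg_iff_add_eq_0)
  then show "-z = x + y" by simp
  show 5: "-x = y + z" using h' by (simp only: neg_eq_iff_add_eq_0)
  have "x = -(y + z)" using h' by (simp only: eq_neg_iff_add_eq_0)
  then show "x = -z + -y" by (simp only: minus_add)
  have "-(x + y) = z" using h by (simp only: neg_eq_iff_add_eq_0)
  then show "z = -y + -x" by (simp only: minus_add)
  show "y = -x + -z" unfolding 5 by (simp add: add.assoc)
  have "y + z + x = 0" using 5 by (metis add.left_inverse)
  then have "y + (z + x) = 0" by (simp add: add.assoc)
  then show "-y = z + x" by (simp only: neg_eq_iff_add_eq_0)
qed

context lk begin

definition istri :: "('k ^ 'n) set \<times> ('k ^ 'n) set \<times> ('k ^ 'n) set \<Rightarrow> bool" where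
  "istri t \<longleftrightarrow> vx i0 (fst t) \<and> vx i1 (fst (snd t)) \<and> vx i2 (snd (snd t))
     \<and> fst t \<subseteq> fst (snd t) \<and> fst (snd t) \<subseteq> snd (snd t)"

definition okt :: "(('k ^ 'n) set \<Rightarrow> ('k ^ 'n) set \<Rightarrow> 'g::group_add) \<Rightarrow> ('k ^ 'n) set \<times> ('k ^ 'n) set \<times> ('k ^ 'n) set \<Rightarrow> bool" where
  "okt f t \<longleftrightarrow> cob1 f (fst t) (fst (snd t)) (snd (snd t)) = 0"

lemma antisym:
  assumes f: "f \<in> cochains1 s II" and i: "i \<in> II" "j \<in> II" "i < j" and x: "vx i x" "vx j y" "x \<subseteq> y"
  shows "f y x = - f x y"
proof -
  have e: "link_edge s II y x" using link_edge_of(2)[OF i x] .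
  have "\<forall>u v. link_edge s II u v \<longrightarrow> f u v = - f v u" using f unfolding cochains1_def by blast
  then show ?thesis using e by blast
qed

lemma tri_rel:
  fixes f :: "('k ^ 'n) set \<Rightarrow> ('k ^ 'n) set \<Rightarrow> 'g::group_add"
  assumes f: "f \<in> cochains1 s II" and t: "istri (a, b, c)" and z: "okt f (a, b, c)"
  shows "f a c = f a b + f b c" "f a b = f a c + f c b" "f b c = f b a + f a c"
    "f c a = f c b + f b a" "f b a = f b c + f c a" "f c b = f c a + f a b"
proof -
  have t': "vx i0 a" "vx i1 b" "vx i2 c" "a \<subseteq> b" "b \<subseteq> c" using t unfolding istri_def by auto
  have i01: "i0 \<in> II" "i1 \<in> II" "i0 < i1" and i12: "i1 \<in> II" "i2 \<in> II" "i1 < i2" using rng by auto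
  have ba: "f b a = - f a b" using antisym[OF f i01 t'(1,2,4)] .
  have cb: "f c b = - f b c" using antisym[OF f i12 t'(2,3,5)] .
  have ac: "a \<subseteq> c" using t'(4,5) by blast
  have i02: "i0 \<in> II" "i2 \<in> II" "i0 < i2" using rng by auto
  have "f c a = - f a c" using antisym[OF f i02 t'(1,3) ac] .
  then have ca: "f a c = - f c a" by simp
  have h: "f a b + f b c + f c a = 0" using z unfolding okt_def cob1_def by simp
  note g = grp3[OF h]
  show "f a c = f a b + f b c" using g(1) ca by simp
  show "f a b = f a c + f c b" using g(2) ca cb by simp
  show "f b c = f b a + f a c" using g(3) ba ca by simp
  show "f c a = f c b + f b a" using g(4) ba cb by simp
  show "f b a = f b c + f c a" using g(5) ba by simp
  show "f c b = f c a + f a b" using g(6) cb by simp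
qed

end

context lk begin

definition a0 :: "('k ^ 'n) set" where "a0 = (SOME a. vx i0 a)"
definition ba :: "('k ^ 'n) set \<Rightarrow> ('k ^ 'n) set" where
  "ba a = (SOME b. vx i1 b \<and> a0 \<subseteq> b \<and> a \<subseteq> b)"
definition ab :: "('k ^ 'n) set \<Rightarrow> ('k ^ 'n) set" where
  "ab b = (SOME a. vx i0 a \<and> a \<subseteq> b)"
definition cb :: "('k ^ 'n) set \<Rightarrow> ('k ^ 'n) set" where
  "cb b = (SOME c. vx i2 c \<and> b \<subseteq> c \<and> ba (ab b) \<subseteq> c)"
definition ac :: "('k ^ 'n) set \<Rightarrow> ('k ^ 'n) set" where
  "ac c = (SOME a. vx i0 a \<and> a \<subseteq> c)"

definition Gc :: "(('k ^ 'n) set \<Rightarrow> ('k ^ 'n) set \<Rightarrow> 'g::group_add) \<Rightarrow> ('k ^ 'n) set \<Rightarrow> 'g" where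
  "Gc f x = (if vec.dim x = i0 then f a0 (ba x) + f (ba x) x
     else if vec.dim x = i1 then f a0 (cb x) + f (cb x) x
     else f a0 (ba (ac x)) + f (ba (ac x)) (ac x) + f (ac x) x)"

lemma I0: "i0 \<in> II" and I1: "i1 \<in> II" and I2: "i2 \<in> II" by auto

lemma a0_vx: "vx i0 a0"
  unfolding a0_def using ex_vx[OF I0] by (rule someI_ex)

lemma ba_props: assumes "vx i0 a" shows "vx i1 (ba a) \<and> a0 \<subseteq> ba a \<and> a \<subseteq> ba a"
proof -
  obtain b where b: "vx i1 b" using ex_vx[OF I1] by blast
  have "\<exists>b'. vx i1 b' \<and> a0 \<subseteq> b' \<and> a \<subseteq> b' \<and> b' \<subseteq> UNIV"
    using pair_in_b[OF a0_vx assms b vec.subspace_UNIV] by simp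
  then have "\<exists>b'. vx i1 b' \<and> a0 \<subseteq> b' \<and> a \<subseteq> b'" by blast
  then show ?thesis unfolding ba_def by (rule someI_ex)
qed

lemma ab_props: assumes "vx i1 b" shows "vx i0 (ab b) \<and> ab b \<subseteq> b"
proof -
  have "\<exists>a. vx i0 a \<and> a \<subseteq> b" using down[OF I0 I1 _ assms] rng by simp
  then show ?thesis unfolding ab_def by (rule someI_ex)
qed

lemma ac_props: assumes "vx i2 c" shows "vx i0 (ac c) \<and> ac c \<subseteq> c"
proof -
  have "\<exists>a. vx i0 a \<and> a \<subseteq> c" using down[OF I0 I2 _ assms] rng by simp
  then show ?thesis unfolding ac_def by (rule someI_ex)
qed

lemma cb_props: assumes b: "vx i1 b" shows "vx i2 (cb b) \<and> b \<subseteq> cb b \<and> a0 \<subseteq> cb b"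
proof -
  have a: "vx i0 (ab b)" "ab b \<subseteq> b" using ab_props[OF b] by auto
  have ba': "vx i1 (ba (ab b))" "a0 \<subseteq> ba (ab b)" "ab b \<subseteq> ba (ab b)" using ba_props[OF a(1)] by auto
  have "\<exists>c. vx i2 c \<and> b \<subseteq> c \<and> ba (ab b) \<subseteq> c" using pair_in_c[OF a(1) b ba'(1) a(2) ba'(3)] .
  then have c: "vx i2 (cb b) \<and> b \<subseteq> cb b \<and> ba (ab b) \<subseteq> cb b" unfolding cb_def by (rule someI_ex)
  then show ?thesis using ba'(2) by blast
qed

lemma Gc_a: "vx i0 a \<Longrightarrow> Gc f a = f a0 (ba a) + f (ba a) a"
  unfolding Gc_def using vx_dim by auto

lemma Gc_b: "vx i1 b \<Longrightarrow> Gc f b = f a0 (cb b) + f (cb b) b"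
  unfolding Gc_def using vx_dim rng by auto

lemma Gc_c: "vx i2 c \<Longrightarrow> Gc f c = Gc f (ac c) + f (ac c) c"
proof -
  assume c: "vx i2 c"
  have "Gc f (ac c) = f a0 (ba (ac c)) + f (ba (ac c)) (ac c)" using Gc_a ac_props[OF c] by blast
  then show ?thesis unfolding Gc_def[of f c] using vx_dim[OF c] rng by auto
qed

lemma Q_lem:
  assumes a: "vx i0 a" and a': "vx i0 a'" and b: "vx i1 b" and ab: "a \<subseteq> b" "a' \<subseteq> b"
  shows "\<exists>ts. length ts \<le> 10 \<and> (\<forall>t\<in>set ts. istri t) \<and>
    (\<forall>f::('k ^ 'n) set \<Rightarrow> ('k ^ 'n) set \<Rightarrow> 'g::group_add. f \<in> cochains1 s II \<longrightarrow> (\<forall>t\<in>set ts. okt f t) \<longrightarrow>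
       Gc f a + f a b + f b a' = Gc f a')"
proof -
  define p where "p = ba a"
  define p' where "p' = ba a'"
  have p: "vx i1 p" "a0 \<subseteq> p" "a \<subseteq> p" using ba_props[OF a] p_def by auto
  have p': "vx i1 p'" "a0 \<subseteq> p'" "a' \<subseteq> p'" using ba_props[OF a'] p'_def by auto
  obtain c1 where c1: "vx i2 c1" "p \<subseteq> c1" "b \<subseteq> c1" using pair_in_c[OF a p(1) b p(3) ab(1)] by blast
  obtain c2 where c2: "vx i2 c2" "b \<subseteq> c2" "p' \<subseteq> c2" using pair_in_c[OF a' b p'(1) ab(2) p'(3)] by blast
  have X: "vec.subspace (c1 \<inter> c2)" using vx_subspace[OF c1(1)] vx_subspace[OF c2(1)] by (rule vec.subspace_inter)
  have i1: "a0 \<subseteq> c1 \<inter> c2" using p(2) c1(2) p'(2) c2(3) by blast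
  have i2: "a \<subseteq> c1 \<inter> c2" using ab(1) c1(3) c2(2) by blast
  have i3: "b \<subseteq> c1 \<inter> c2" using c1(3) c2(2) by blast
  obtain q where q: "vx i1 q" "a0 \<subseteq> q" "a \<subseteq> q" "q \<subseteq> c1 \<inter> c2"
    using pair_in_b[OF a0_vx a b X i1 i2 i3] by blast
  let ?ts = "[(a0,p,c1), (a,p,c1), (a0,q,c1), (a,q,c1), (a,b,c2), (a',b,c2), (a,q,c2), (a0,q,c2), (a',p',c2), (a0,p',c2)]"
  have tri: "\<forall>t\<in>set ?ts. istri t" unfolding istri_def using a a' b p p' c1 c2 q ab a0_vx by auto
  have main: "Gc f a + f a b + f b a' = Gc f a'" if f: "f \<in> cochains1 s II" and ok: "\<forall>t\<in>set ?ts. okt f t"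
    for f :: "('k ^ 'n) set \<Rightarrow> ('k ^ 'n) set \<Rightarrow> 'g"
  proof -
    have r1: "f a0 p = f a0 c1 + f c1 p" using tri_rel(2)[OF f] tri ok by simp
    have r2: "f c1 a = f c1 p + f p a" using tri_rel(4)[OF f] tri ok by simp
    have r3: "f a0 c1 = f a0 q + f q c1" using tri_rel(1)[OF f] tri ok by simp
    have r4: "f q a = f q c1 + f c1 a" using tri_rel(5)[OF f] tri ok by simp
    have r5: "f a b = f a c2 + f c2 b" using tri_rel(2)[OF f] tri ok by simp
    have r6: "f c2 a' = f c2 b + f b a'" using tri_rel(4)[OF f] tri ok by simp
    have r7: "f q c2 = f q a + f a c2" using tri_rel(3)[OF f] tri ok by simp
    have r8: "f a0 c2 = f a0 q + f q c2" using tri_rel(1)[OF f] tri ok by simp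
    have r9: "f c2 a' = f c2 p' + f p' a'" using tri_rel(4)[OF f] tri ok by simp
    have r10: "f a0 p' = f a0 c2 + f c2 p'" using tri_rel(2)[OF f] tri ok by simp
    have "Gc f a + f a b + f b a' = f a0 p + f p a + f a b + f b a'" using Gc_a[OF a, of f] p_def by simp
    also have "\<dots> = f a0 c1 + f c1 p + f p a + f a b + f b a'" by (simp add: r1 add.assoc)
    also have "\<dots> = f a0 c1 + f c1 a + f a b + f b a'" by (simp add: r2 add.assoc)
    also have "\<dots> = f a0 q + f q c1 + f c1 a + f a b + f b a'" by (simp add: r3 add.assoc)
    also have "\<dots> = f a0 q + f q a + f a b + f b a'" by (simp add: r4 add.assoc)
    also have "\<dots> = f a0 q + f q a + f a c2 + f c2 b + f b a'" by (simp add: r5 add.assoc)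
    also have "\<dots> = f a0 q + f q a + f a c2 + f c2 a'" by (simp add: r6 add.assoc)
    also have "\<dots> = f a0 q + f q c2 + f c2 a'" by (simp add: r7 add.assoc)
    also have "\<dots> = f a0 c2 + f c2 a'" by (simp add: r8 add.assoc)
    also have "\<dots> = f a0 c2 + f c2 p' + f p' a'" by (simp add: r9 add.assoc)
    also have "\<dots> = f a0 p' + f p' a'" by (simp add: r10 add.assoc)
    also have "\<dots> = Gc f a'" using Gc_a[OF a', of f] p'_def by simp
    finally show ?thesis .
  qed
  show ?thesis
    apply (rule exI[of _ ?ts])
    using tri main by simp
qed

end

context lk begin

lemma E_ab:
  assumes a: "vx i0 a" and b: "vx i1 b" and ab: "a \<subseteq> b"
  shows "\<exists>ts. length ts \<le> 7 \<and> (\<forall>t\<in>set ts. istri t) \<and>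
    (\<forall>f::('k ^ 'n) set \<Rightarrow> ('k ^ 'n) set \<Rightarrow> 'g::group_add. f \<in> cochains1 s II \<longrightarrow> (\<forall>t\<in>set ts. okt f t) \<longrightarrow>
       Gc f a + f a b = Gc f b)"
proof -
  define p where "p = ba a"
  define c where "c = cb b"
  have p: "vx i1 p" "a0 \<subseteq> p" "a \<subseteq> p" using ba_props[OF a] p_def by auto
  have c: "vx i2 c" "b \<subseteq> c" "a0 \<subseteq> c" using cb_props[OF b] c_def by auto
  obtain c' where c': "vx i2 c'" "p \<subseteq> c'" "b \<subseteq> c'" using pair_in_c[OF a p(1) b p(3) ab] by blast
  have X: "vec.subspace (c' \<inter> c)" using vx_subspace[OF c'(1)] vx_subspace[OF c(1)] by (rule vec.subspace_inter)
  have i1: "a0 \<subseteq> c' \<inter> c" using p(2) c'(2) c(3) by blast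
  have i2: "a \<subseteq> c' \<inter> c" using ab c'(3) c(2) by blast
  have i3: "b \<subseteq> c' \<inter> c" using c'(3) c(2) by blast
  obtain q where q: "vx i1 q" "a0 \<subseteq> q" "a \<subseteq> q" "q \<subseteq> c' \<inter> c"
    using pair_in_b[OF a0_vx a b X i1 i2 i3] by blast
  let ?ts = "[(a,b,c), (a0,p,c'), (a,p,c'), (a0,q,c'), (a,q,c'), (a,q,c), (a0,q,c)]"
  have tri: "\<forall>t\<in>set ?ts. istri t" unfolding istri_def using a b p c c' q ab a0_vx by auto
  have main: "Gc f a + f a b = Gc f b" if f: "f \<in> cochains1 s II" and ok: "\<forall>t\<in>set ?ts. okt f t"
    for f :: "('k ^ 'n) set \<Rightarrow> ('k ^ 'n) set \<Rightarrow> 'g"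
  proof -
    have r1: "f a b = f a c + f c b" using tri_rel(2)[OF f] tri ok by simp
    have r2: "f a0 p = f a0 c' + f c' p" using tri_rel(2)[OF f] tri ok by simp
    have r3: "f c' a = f c' p + f p a" using tri_rel(4)[OF f] tri ok by simp
    have r4: "f a0 c' = f a0 q + f q c'" using tri_rel(1)[OF f] tri ok by simp
    have r5: "f q a = f q c' + f c' a" using tri_rel(5)[OF f] tri ok by simp
    have r6: "f q c = f q a + f a c" using tri_rel(3)[OF f] tri ok by simp
    have r7: "f a0 c = f a0 q + f q c" using tri_rel(1)[OF f] tri ok by simp
    have "Gc f a + f a b = f a0 p + f p a + f a b" using Gc_a[OF a, of f] p_def by simp
    also have "\<dots> = f a0 c' + f c' p + f p a + f a b" by (simp add: r2 add.assoc)
    also have "\<dots> = f a0 c' + f c' a + f a b" by (simp add: r3 add.assoc)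
    also have "\<dots> = f a0 q + f q c' + f c' a + f a b" by (simp add: r4 add.assoc)
    also have "\<dots> = f a0 q + f q a + f a b" by (simp add: r5 add.assoc)
    also have "\<dots> = f a0 q + f q a + f a c + f c b" by (simp add: r1 add.assoc)
    also have "\<dots> = f a0 q + f q c + f c b" by (simp add: r6 add.assoc)
    also have "\<dots> = f a0 c + f c b" by (simp add: r7 add.assoc)
    also have "\<dots> = Gc f b" using Gc_b[OF b, of f] c_def by simp
    finally show ?thesis .
  qed
  show ?thesis
    apply (rule exI[of _ ?ts])
    using tri main by simp
qed

lemma E_ac:
  assumes a: "vx i0 a" and c: "vx i2 c" and ac: "a \<subseteq> c"
  shows "\<exists>ts. length ts \<le> 12 \<and> (\<forall>t\<in>set ts. istri t) \<and>
    (\<forall>f::('k ^ 'n) set \<Rightarrow> ('k ^ 'n) set \<Rightarrow> 'g::group_add. f \<in> cochains1 s II \<longrightarrow> (\<forall>t\<in>set ts. okt f t) \<longrightarrow>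
       Gc f a + f a c = Gc f c)"
proof -
  define e where "e = ac c"
  have e: "vx i0 e" "e \<subseteq> c" using ac_props[OF c] e_def by auto
  obtain b0 where b0: "vx i1 b0" "b0 \<subseteq> c" using down[OF I1 I2 _ c] rng by auto
  obtain q where q: "vx i1 q" "a \<subseteq> q" "e \<subseteq> q" "q \<subseteq> c"
    using pair_in_b[OF a e(1) b0(1) vx_subspace[OF c] ac e(2) b0(2)] by blast
  obtain ts where ts: "length ts \<le> 10" "\<forall>t\<in>set ts. istri t"
    "\<forall>f::('k ^ 'n) set \<Rightarrow> ('k ^ 'n) set \<Rightarrow> 'g::group_add. f \<in> cochains1 s II \<longrightarrow> (\<forall>t\<in>set ts. okt f t) \<longrightarrow>
       Gc f a + f a q + f q e = Gc f e"
    using Q_lem[OF a e(1) q(1,2,3)] by blast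
  let ?ts = "[(a,q,c), (e,q,c)] @ ts"
  have tri: "\<forall>t\<in>set ?ts. istri t" unfolding istri_def using a q c e ts(2) unfolding istri_def by auto
  have main: "Gc f a + f a c = Gc f c" if f: "f \<in> cochains1 s II" and ok: "\<forall>t\<in>set ?ts. okt f t"
    for f :: "('k ^ 'n) set \<Rightarrow> ('k ^ 'n) set \<Rightarrow> 'g"
  proof -
    have r1: "f a c = f a q + f q c" using tri_rel(1)[OF f] tri ok by simp
    have r2: "f e c = f e q + f q c" using tri_rel(1)[OF f] tri ok by simp
    have Q: "Gc f a + f a q + f q e = Gc f e" using ts(3) f ok by simp
    have an: "f q e = - f e q" using antisym[OF f I0 I1 _ e(1) q(1) q(3)] rng by simp
    have "Gc f c = Gc f e + f e c" using Gc_c[OF c, of f] e_def by simp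
    also have "\<dots> = Gc f a + f a q + f q e + f e c" using Q by simp
    also have "\<dots> = Gc f a + f a q + f q e + f e q + f q c" by (simp add: r2 add.assoc)
    also have "\<dots> = Gc f a + f a q + f q c" by (simp add: an add.assoc)
    also have "\<dots> = Gc f a + f a c" by (simp add: r1 add.assoc)
    finally show ?thesis by simp
  qed
  show ?thesis
    apply (rule exI[of _ ?ts])
    using tri main ts(1) by simp
qed

lemma E_bc:
  assumes b: "vx i1 b" and c: "vx i2 c" and bc: "b \<subseteq> c"
  shows "\<exists>ts. length ts \<le> 20 \<and> (\<forall>t\<in>set ts. istri t) \<and>
    (\<forall>f::('k ^ 'n) set \<Rightarrow> ('k ^ 'n) set \<Rightarrow> 'g::group_add. f \<in> cochains1 s II \<longrightarrow> (\<forall>t\<in>set ts. okt f t) \<longrightarrow>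
       Gc f b + f b c = Gc f c)"
proof -
  define a where "a = ab b"
  have a: "vx i0 a" "a \<subseteq> b" using ab_props[OF b] a_def by auto
  have ac: "a \<subseteq> c" using a(2) bc by blast
  obtain ts1 where ts1: "length ts1 \<le> 7" "\<forall>t\<in>set ts1. istri t"
    "\<forall>f::('k ^ 'n) set \<Rightarrow> ('k ^ 'n) set \<Rightarrow> 'g::group_add. f \<in> cochains1 s II \<longrightarrow> (\<forall>t\<in>set ts1. okt f t) \<longrightarrow>
       Gc f a + f a b = Gc f b"
    using E_ab[OF a(1) b a(2)] by blast
  obtain ts2 where ts2: "length ts2 \<le> 12" "\<forall>t\<in>set ts2. istri t"
    "\<forall>f::('k ^ 'n) set \<Rightarrow> ('k ^ 'n) set \<Rightarrow> 'g::group_add. f \<in> cochains1 s II \<longrightarrow> (\<forall>t\<in>set ts2. okt f t) \<longrightarrow>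
       Gc f a + f a c = Gc f c"
    using E_ac[OF a(1) c ac] by blast
  let ?ts = "[(a,b,c)] @ ts1 @ ts2"
  have tri: "\<forall>t\<in>set ?ts. istri t" using a b c bc ts1(2) ts2(2) unfolding istri_def by auto
  have main: "Gc f b + f b c = Gc f c" if f: "f \<in> cochains1 s II" and ok: "\<forall>t\<in>set ?ts. okt f t"
    for f :: "('k ^ 'n) set \<Rightarrow> ('k ^ 'n) set \<Rightarrow> 'g"
  proof -
    have r1: "f a c = f a b + f b c" using tri_rel(1)[OF f] tri ok by simp
    have e1: "Gc f a + f a b = Gc f b" using ts1(3) f ok by simp
    have e2: "Gc f a + f a c = Gc f c" using ts2(3) f ok by simp
    have "Gc f b + f b c = Gc f a + f a b + f b c" using e1 by simp
    also have "\<dots> = Gc f a + f a c" by (simp add: r1 add.assoc)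
    also have "\<dots> = Gc f c" by (rule e2)
    finally show ?thesis .
  qed
  show ?thesis
    apply (rule exI[of _ ?ts])
    using tri main ts1(1) ts2(1) by simp
qed

end

lemma finite_LF: "finite (link_flags (s :: ('k::{field,finite} ^ 'n) set set))"
  by (rule finite_subset[OF subset_UNIV finite_class.finite_UNIV])

lemma finite_Gs: "finite (Gs (s :: ('k::{field,finite} ^ 'n) set set))"
  by (rule finite_subset[OF subset_UNIV]) simp

lemma id_Gs: "id \<in> Gs s"
  unfolding Gs_def using vec.linear_id by simp

lemma LF_ne:
  assumes "is_chain (s :: ('k::{field,finite} ^ 'n) set set)"
  shows "link_flags s \<noteq> {}"
  using ext_max[OF assms] unfolding link_flags_def by blast

lemma fiber_le:
  fixes s :: "('k::{field,finite} ^ 'n) set set"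
  assumes F1: "F1 \<in> link_flags s" and F2: "F2 \<in> link_flags s"
  shows "card {h \<in> Gs s. act h F0 = F1} \<le> card {h \<in> Gs s. act h F0 = F2}"
proof -
  obtain k where k: "k \<in> Gs s" "act k F1 = F2" using transitive[OF F1 F2] by blast
  have inj: "inj_on (\<lambda>h. k \<circ> h) {h \<in> Gs s. act h F0 = F1}"
  proof (rule inj_onI)
    fix h1 h2 assume "k \<circ> h1 = k \<circ> h2"
    then have "\<forall>x. k (h1 x) = k (h2 x)" by (metis comp_apply)
    then show "h1 = h2" using Gs_inj[OF k(1)] by (auto simp: inj_def)
  qed
  have "(\<lambda>h. k \<circ> h) ` {h \<in> Gs s. act h F0 = F1} \<subseteq> {h \<in> Gs s. act h F0 = F2}"
  proof
    fix x assume "x \<in> (\<lambda>h. k \<circ> h) ` {h \<in> Gs s. act h F0 = F1}"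
    then obtain h where h: "h \<in> Gs s" "act h F0 = F1" "x = k \<circ> h" by blast
    have "act x F0 = F2" using h k(2) act_comp[of k h F0] by simp
    then show "x \<in> {h \<in> Gs s. act h F0 = F2}" using Gs_comp[OF k(1) h(1)] h(3) by simp
  qed
  then show ?thesis using card_inj_on_le[OF inj] finite_Gs by (simp add: finite_subset)
qed

lemma orbit_sum:
  fixes s :: "('k::{field,finite} ^ 'n) set set"
  assumes F0: "F0 \<in> link_flags s"
  shows "(\<Sum>h\<in>Gs s. (if P (act h F0) then 1 else 0 :: real))
     = real (card (Gs s)) / real (card (link_flags s)) * real (card {F \<in> link_flags s. P F})"
proof -
  let ?G = "Gs s" and ?L = "link_flags s"
  let ?S = "\<lambda>F. {h \<in> ?G. act h F0 = F}"
  define c where "c = card (?S F0)"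
  have cS: "card (?S F) = c" if "F \<in> ?L" for F
    using fiber_le[OF that F0, of F0] fiber_le[OF F0 that, of F0] c_def by simp
  have img: "(\<lambda>h. act h F0) ` ?G \<subseteq> ?L" using act_link F0 by blast
  have grp: "(\<Sum>h\<in>?G. g h) = (\<Sum>F\<in>?L. \<Sum>h\<in>?S F. g h)" for g :: "_ \<Rightarrow> real"
    using sum.group[OF finite_Gs finite_LF img, of g] by simp
  have "(\<Sum>h\<in>?G. (if P (act h F0) then 1 else 0 :: real))
      = (\<Sum>F\<in>?L. \<Sum>h\<in>?S F. (if P F then 1 else 0 :: real))"
    unfolding grp by (intro sum.cong refl) auto
  also have "\<dots> = (\<Sum>F\<in>?L. real c * (if P F then 1 else 0))"
    by (intro sum.cong refl) (simp add: cS)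
  also have "\<dots> = real c * real (card {F \<in> ?L. P F})"
  proof -
    have "(\<Sum>F\<in>?L. real c * (if P F then 1 else 0)) = real c * (\<Sum>F\<in>?L. (if P F then 1 else 0))"
      by (simp add: sum_distrib_left)
    also have "(\<Sum>F\<in>?L. (if P F then 1 else 0::real)) = real (card {F \<in> ?L. P F})"
      using finite_LF[of s] by (simp add: sum.If_cases Int_def)
    finally show ?thesis .
  qed
  finally have e1: "(\<Sum>h\<in>?G. (if P (act h F0) then 1 else 0 :: real)) = real c * real (card {F \<in> ?L. P F})" .
  have "real (card ?G) = (\<Sum>h\<in>?G. 1::real)" by simp
  also have "\<dots> = (\<Sum>F\<in>?L. \<Sum>h\<in>?S F. 1::real)" by (rule grp)
  also have "\<dots> = (\<Sum>F\<in>?L. real c)" by (intro sum.cong refl) (simp add: cS)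
  also have "\<dots> = real (card ?L) * real c" by simp
  finally have e2: "real (card ?G) = real (card ?L) * real c" .
  have "card ?L > 0" using F0 finite_LF card_gt_0_iff by blast
  then show ?thesis using e1 e2 by simp
qed


definition ind :: "bool \<Rightarrow> real" where "ind P = (if P then 1 else 0)"

lemma ind_ge0: "0 \<le> ind P" by (simp add: ind_def)

lemma ind_exists_le:
  assumes "\<exists>t\<in>set ts. P t"
  shows "ind (Q) \<le> (\<Sum>k<length ts. ind (P (ts ! k)))"
proof -
  obtain k where k: "k < length ts" "P (ts ! k)" using assms by (auto simp: in_set_conv_nth)
  have "ind Q \<le> ind (P (ts ! k))" using k by (simp add: ind_def)
  also have "\<dots> \<le> (\<Sum>k<length ts. ind (P (ts ! k)))"
    by (rule member_le_sum) (use k ind_ge0 in auto)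
  finally show ?thesis .
qed

context lk begin

definition pull :: "('k ^ 'n \<Rightarrow> 'k ^ 'n) \<Rightarrow> (('k ^ 'n) set \<Rightarrow> ('k ^ 'n) set \<Rightarrow> 'g) \<Rightarrow> ('k ^ 'n) set \<Rightarrow> ('k ^ 'n) set \<Rightarrow> 'g" where
  "pull h f = (\<lambda>u v. f (h ` u) (h ` v))"

definition dl :: "(('k ^ 'n) set \<Rightarrow> ('k ^ 'n) set \<Rightarrow> 'g::group_add) \<Rightarrow> ('k ^ 'n \<Rightarrow> 'k ^ 'n) \<Rightarrow> ('k ^ 'n) set \<Rightarrow> ('k ^ 'n) set \<Rightarrow> 'g" where
  "dl f h = (\<lambda>u v. - Gc (pull h f) (h -` u) - - Gc (pull h f) (h -` v))"

abbreviation "LF \<equiv> link_flags s"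
abbreviation "GG \<equiv> Gs s"

definition bad :: "(('k ^ 'n) set \<Rightarrow> ('k ^ 'n) set \<Rightarrow> 'g::group_add) \<Rightarrow> ('k ^ 'n) set set \<Rightarrow> bool" where
  "bad f F \<longleftrightarrow> cob1 f (at_dim F i0) (at_dim F i1) (at_dim F i2) \<noteq> 0"

lemma pull_cochain:
  assumes h: "h \<in> GG" and f: "f \<in> cochains1 s II"
  shows "pull h f \<in> cochains1 s II"
  unfolding cochains1_def
proof (intro CollectI allI impI)
  fix u v assume e: "link_edge s II u v"
  have fa: "\<forall>u v. link_edge s II u v \<longrightarrow> f u v = - f v u" using f unfolding cochains1_def by blast
  obtain i j where ij: "i \<in> II" "j \<in> II" "i < j"
    "(vx i u \<and> vx j v \<and> u \<subseteq> v) \<or> (vx i v \<and> vx j u \<and> v \<subseteq> u)"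
    using link_edge_cases[OF e] by blast
  have "link_edge s II (h ` u) (h ` v)"
  proof (cases "vx i u \<and> vx j v \<and> u \<subseteq> v")
    case True
    then have a: "vx i u" "vx j v" "u \<subseteq> v" by auto
    have "h ` u \<subseteq> h ` v" using a(3) by (rule image_mono)
    then show ?thesis using link_edge_of(1)[OF ij(1-3) vx_img[OF h ij(1) a(1)] vx_img[OF h ij(2) a(2)]] by simp
  next
    case False
    then have a: "vx i v" "vx j u" "v \<subseteq> u" using ij(4) by auto
    have "h ` v \<subseteq> h ` u" using a(3) by (rule image_mono)
    then show ?thesis using link_edge_of(2)[OF ij(1-3) vx_img[OF h ij(1) a(1)] vx_img[OF h ij(2) a(2)]] by simp
  qed
  then have "f (h ` u) (h ` v) = - f (h ` v) (h ` u)" using fa by blast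
  then show "pull h f u v = - pull h f v u" unfolding pull_def by simp
qed

lemma dl_cocycle: "dl f h \<in> cocycles1 s II"
  unfolding cocycles1_def cochains1_def cob1_def dl_def
  by (simp add: diff_conv_add_uminus add.assoc minus_add)

lemma okt_pull: "okt (pull h f) (x, y, z) \<longleftrightarrow> cob1 f (h ` x) (h ` y) (h ` z) = 0"
  unfolding okt_def pull_def cob1_def by simp

lemma tri_sum:
  fixes f :: "('k ^ 'n) set \<Rightarrow> ('k ^ 'n) set \<Rightarrow> 'g::group_add"
  assumes t: "istri t"
  shows "(\<Sum>h\<in>GG. ind (\<not> okt (pull h f) t))
     = real (card GG) / real (card LF) * real (card {F \<in> LF. bad f F})"
proof -
  obtain x y z where xyz: "t = (x, y, z)" by (cases t) auto
  have tv: "vx i0 x" "vx i1 y" "vx i2 z" "x \<subseteq> y" "y \<subseteq> z" using t xyz unfolding istri_def by auto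
  obtain F where F: "F \<in> LF" "at_dim F i0 = x" "at_dim F i1 = y" "at_dim F i2 = z"
    using tri_flag[OF tv] by blast
  have Fm: "F \<in> max_chains" using F by (simp add: link_flags_def)
  have eq: "ind (\<not> okt (pull h f) t) = (if bad f (act h F) then 1 else 0)" if h: "h \<in> GG" for h
  proof -
    have "at_dim (act h F) k = h ` at_dim F k" if "k \<in> II" for k
      using at_dim_act[OF Gs_lin[OF h] Gs_inj[OF h] Fm] that rng i2n by auto
    then show ?thesis using F unfolding xyz okt_pull bad_def ind_def by simp
  qed
  have "(\<Sum>h\<in>GG. ind (\<not> okt (pull h f) t)) = (\<Sum>h\<in>GG. (if bad f (act h F) then 1 else 0))"
    by (intro sum.cong refl eq)
  also have "\<dots> = real (card GG) / real (card LF) * real (card {F \<in> LF. bad f F})"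
    by (rule orbit_sum[OF F(1)])
  finally show ?thesis .
qed

end

context lk begin

lemma edge_bound:
  fixes f :: "('k ^ 'n) set \<Rightarrow> ('k ^ 'n) set \<Rightarrow> 'g::group_add" and R :: nat
  assumes f: "f \<in> cochains1 s II" and ij: "i \<in> II" "j \<in> II"
    and E: "\<And>F. F \<in> LF \<Longrightarrow> \<exists>ts. length ts \<le> R \<and> (\<forall>t\<in>set ts. istri t) \<and>
      (\<forall>f'::('k ^ 'n) set \<Rightarrow> ('k ^ 'n) set \<Rightarrow> 'g. f' \<in> cochains1 s II \<longrightarrow> (\<forall>t\<in>set ts. okt f' t) \<longrightarrow>
        Gc f' (at_dim F i) + f' (at_dim F i) (at_dim F j) = Gc f' (at_dim F j))"
  shows "(\<Sum>h\<in>GG. real (card {F \<in> LF. f (at_dim F i) (at_dim F j) \<noteq> dl f h (at_dim F i) (at_dim F j)}))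
    \<le> real R * real (card GG) * real (card {F \<in> LF. bad f F})"
proof -
  let ?P = "\<lambda>F ts. length ts \<le> R \<and> (\<forall>t\<in>set ts. istri t) \<and>
      (\<forall>f'::('k ^ 'n) set \<Rightarrow> ('k ^ 'n) set \<Rightarrow> 'g. f' \<in> cochains1 s II \<longrightarrow> (\<forall>t\<in>set ts. okt f' t) \<longrightarrow>
        Gc f' (at_dim F i) + f' (at_dim F i) (at_dim F j) = Gc f' (at_dim F j))"
  define TS where "TS F = (SOME ts. ?P F ts)" for F
  have TSp: "?P F (TS F)" if "F \<in> LF" for F unfolding TS_def using E[OF that] by (rule someI_ex)
  define W where "W = real (card {F \<in> LF. bad f F})"
  define M where "M = real (card GG)"
  define N where "N = real (card LF)"
  let ?Phi = "\<lambda>h F. f (at_dim F i) (at_dim F j) \<noteq> dl f h (at_dim F i) (at_dim F j)"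
  let ?T = "\<lambda>h F. (\<Sum>k<length (TS F). ind (\<not> okt (pull h f) (TS F ! k)))"
  have ptw: "ind (?Phi h (act h F)) \<le> ?T h F" if h: "h \<in> GG" and F: "F \<in> LF" for h F
  proof (cases "\<exists>t\<in>set (TS F). \<not> okt (pull h f) t")
    case True
    then show ?thesis by (rule ind_exists_le)
  next
    case False
    let ?x = "at_dim F i" and ?y = "at_dim F j"
    have Fm: "F \<in> max_chains" using F by (simp add: link_flags_def)
    have ad: "at_dim (act h F) k = h ` at_dim F k" if "k \<in> II" for k
      using at_dim_act[OF Gs_lin[OF h] Gs_inj[OF h] Fm] that rng i2n by auto
    have pc: "pull h f \<in> cochains1 s II" by (rule pull_cochain[OF h f])
    have e: "Gc (pull h f) ?x + pull h f ?x ?y = Gc (pull h f) ?y" using TSp[OF F] pc False by blast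
    have e2: "pull h f ?x ?y = - Gc (pull h f) ?x + Gc (pull h f) ?y"
    proof -
      have "- Gc (pull h f) ?x + (Gc (pull h f) ?x + pull h f ?x ?y) = - Gc (pull h f) ?x + Gc (pull h f) ?y"
        using e by simp
      then show ?thesis by (simp add: add.assoc[symmetric])
    qed
    have vi: "h -` (h ` A) = A" for A using Gs_inj[OF h] by (simp add: inj_vimage_image_eq)
    have "\<not> ?Phi h (act h F)"
      using e2 unfolding ad[OF ij(1)] ad[OF ij(2)] dl_def vi by (simp add: pull_def diff_conv_add_uminus)
    then show ?thesis by (simp add: ind_def sum_nonneg ind_ge0)
  qed
  have step1: "real (card {F \<in> LF. ?Phi h F}) \<le> (\<Sum>F\<in>LF. ?T h F)" if h: "h \<in> GG" for h
  proof -
    have "real (card {F \<in> LF. ?Phi h F}) = (\<Sum>F\<in>LF. ind (?Phi h F))"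
      using finite_LF[of s] by (simp add: ind_def sum.If_cases Int_def)
    also have "\<dots> = (\<Sum>F\<in>LF. ind (?Phi h (act h F)))"
      using sum.reindex_bij_betw[OF act_bij[OF h], of "\<lambda>F. ind (?Phi h F)"] by simp
    also have "\<dots> \<le> (\<Sum>F\<in>LF. ?T h F)" by (intro sum_mono ptw[OF h])
    finally show ?thesis .
  qed
  have "(\<Sum>h\<in>GG. real (card {F \<in> LF. ?Phi h F})) \<le> (\<Sum>h\<in>GG. \<Sum>F\<in>LF. ?T h F)"
    by (intro sum_mono step1)
  also have "\<dots> = (\<Sum>F\<in>LF. \<Sum>k<length (TS F). \<Sum>h\<in>GG. ind (\<not> okt (pull h f) (TS F ! k)))"
    by (simp add: sum.swap[of _ GG])
  also have "\<dots> = (\<Sum>F\<in>LF. \<Sum>k<length (TS F). M / N * W)"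
  proof (intro sum.cong refl)
    fix F k assume F: "F \<in> LF" and k: "k \<in> {..<length (TS F)}"
    have m: "TS F ! k \<in> set (TS F)" using k by simp
    have "\<forall>t\<in>set (TS F). istri t" using TSp[OF F] by blast
    then have "istri (TS F ! k)" using m by blast
    then show "(\<Sum>h\<in>GG. ind (\<not> okt (pull h f) (TS F ! k))) = M / N * W"
      unfolding M_def N_def W_def by (rule tri_sum)
  qed
  also have "\<dots> = (\<Sum>F\<in>LF. real (length (TS F)) * (M / N * W))" by simp
  also have "\<dots> \<le> (\<Sum>F\<in>LF. real R * (M / N * W))"
  proof (intro sum_mono mult_right_mono)
    fix F assume F: "F \<in> LF"
    have "length (TS F) \<le> R" using TSp[OF F] by blast
    then show "real (length (TS F)) \<le> real R" by simp
    show "0 \<le> M / N * W" unfolding M_def N_def W_def by simp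
  qed
  also have "\<dots> = N * (real R * (M / N * W))" unfolding N_def by simp
  also have "\<dots> = real R * M * W"
  proof -
    have "card LF > 0" using LF_ne[OF sc] finite_LF[of s] card_gt_0_iff by blast
    then have "N > 0" unfolding N_def by simp
    then show ?thesis by simp
  qed
  finally show ?thesis unfolding M_def W_def .
qed

end

lemma cyc3: "(a - b) + (b - c) + (c - a) = (0::'g::group_add)"
  by (simp only: diff_conv_add_uminus add.assoc minus_add_cancel right_minus)
lemma solve1: fixes x e y :: "'g::group_add" assumes "x + e = y" shows "e = -x - -y"
proof -
  have "e = -x + (x + e)" by (simp only: minus_add_cancel)
  also have "\<dots> = -x + y" by (simp only: assms)
  also have "\<dots> = -x - -y" by (simp only: diff_minus_eq_add)
  finally show ?thesis .
qed
lemma solve2: fixes x e e' y :: "'g::group_add" assumes "y + e' = x" "e = - e'" shows "e = -x - -y"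
proof -
  have "e' = -y - -x" using solve1[OF assms(1)] .
  then have "e = - (-y - -x)" using assms(2) by simp
  also have "\<dots> = -x - -y" by (simp only: minus_diff_eq)
  finally show ?thesis .
qed

context lk begin

lemma E_all:
  assumes ij: "i \<in> II" "j \<in> II" "i < j" and x: "vx i x" "vx j y" "x \<subseteq> y"
  shows "\<exists>ts. (\<forall>t\<in>set ts. istri t) \<and>
    (\<forall>f::('k ^ 'n) set \<Rightarrow> ('k ^ 'n) set \<Rightarrow> 'g::group_add. f \<in> cochains1 s II \<longrightarrow> (\<forall>t\<in>set ts. okt f t) \<longrightarrow>
       Gc f x + f x y = Gc f y)"
proof -
  consider "i = i0" "j = i1" | "i = i0" "j = i2" | "i = i1" "j = i2" using ij rng by auto
  then show ?thesis
  proof cases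
    case 1 then show ?thesis using E_ab[of x y] x by blast
  next
    case 2 then show ?thesis using E_ac[of x y] x by blast
  next
    case 3 then show ?thesis using E_bc[of x y] x by blast
  qed
qed

lemma tri_edges:
  assumes "link_triangle s II u v w"
  shows "link_edge s II u v" "link_edge s II v w" "link_edge s II w u"
proof -
  have ne: "u \<noteq> v" "v \<noteq> w" "u \<noteq> w" and d: "\<forall>V\<in>{u,v,w}. vec.dim V \<in> II"
    and ch: "is_chain (s \<union> {u, v, w})"
    using assms unfolding link_triangle_def link_face_def by auto
  have sub: "is_chain T" if "T \<subseteq> s \<union> {u, v, w}" for T
    using ch that unfolding is_chain_def by blast
  show "link_edge s II u v" "link_edge s II v w" "link_edge s II w u"
    unfolding link_edge_def link_face_def using ne d sub[of "s \<union> {u, v}"] sub[of "s \<union> {v, w}"]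
      sub[of "s \<union> {w, u}"] by auto
qed

lemma Z_eq_B: "(cocycles1 s II :: (('k ^ 'n) set \<Rightarrow> ('k ^ 'n) set \<Rightarrow> 'g::group_add) set) = coboundaries1 s II"
proof
  show "(cocycles1 s II :: (('k ^ 'n) set \<Rightarrow> ('k ^ 'n) set \<Rightarrow> 'g) set) \<subseteq> coboundaries1 s II"
  proof
    fix f :: "('k ^ 'n) set \<Rightarrow> ('k ^ 'n) set \<Rightarrow> 'g" assume fz: "f \<in> cocycles1 s II"
    have fc: "f \<in> cochains1 s II" using fz unfolding cocycles1_def by simp
    have fa: "\<forall>u v. link_edge s II u v \<longrightarrow> f u v = - f v u" using fc unfolding cochains1_def by blast
    have okall: "okt f t" if "istri t" for t
    proof -
      obtain a b c where t: "t = (a, b, c)" by (cases t) auto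
      have "link_triangle s II a b c" using that t link_tri_of unfolding istri_def by auto
      then show ?thesis using fz t unfolding cocycles1_def okt_def by auto
    qed
    have E: "Gc f x + f x y = Gc f y" if ij: "i \<in> II" "j \<in> II" "i < j" and x: "vx i x" "vx j y" "x \<subseteq> y" for i j x y
    proof -
      obtain ts where ts: "\<forall>t\<in>set ts. istri t"
        "\<forall>f::('k ^ 'n) set \<Rightarrow> ('k ^ 'n) set \<Rightarrow> 'g. f \<in> cochains1 s II \<longrightarrow> (\<forall>t\<in>set ts. okt f t) \<longrightarrow>
          Gc f x + f x y = Gc f y" using E_all[OF ij x] by blast
      have "\<forall>t\<in>set ts. okt f t" using ts(1) okall by blast
      then show ?thesis using ts(2) fc by blast
    qed
    have key: "f u v = (- Gc f u) - (- Gc f v)" if e: "link_edge s II u v" for u v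
    proof -
      obtain i j where ij: "i \<in> II" "j \<in> II" "i < j"
        "(vx i u \<and> vx j v \<and> u \<subseteq> v) \<or> (vx i v \<and> vx j u \<and> v \<subseteq> u)"
        using link_edge_cases[OF e] by blast
      show ?thesis
      proof (cases "vx i u \<and> vx j v \<and> u \<subseteq> v")
        case True
        then have a: "vx i u" "vx j v" "u \<subseteq> v" by auto
        have "Gc f u + f u v = Gc f v" by (rule E[OF ij(1-3) a])
        then show ?thesis by (rule solve1)
      next
        case False
        then have a: "vx i v" "vx j u" "v \<subseteq> u" using ij(4) by auto
        have h1: "Gc f v + f v u = Gc f u" by (rule E[OF ij(1-3) a])
        have h2: "f u v = - f v u" using fa e by simp
        show ?thesis by (rule solve2[OF h1 h2])
      qed
    qed
    have "\<forall>u v. link_edge s II u v \<longrightarrow> f u v = (\<lambda>u. - Gc f u) u - (\<lambda>u. - Gc f u) v"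
      using key by simp
    then have "\<exists>g. \<forall>u v. link_edge s II u v \<longrightarrow> f u v = g u - g v" by (rule exI[of _ "\<lambda>u. - Gc f u"])
    then show "f \<in> coboundaries1 s II" unfolding coboundaries1_def using fc by blast
  qed
next
  show "(coboundaries1 s II :: (('k ^ 'n) set \<Rightarrow> ('k ^ 'n) set \<Rightarrow> 'g) set) \<subseteq> cocycles1 s II"
  proof
    fix f :: "('k ^ 'n) set \<Rightarrow> ('k ^ 'n) set \<Rightarrow> 'g" assume fb: "f \<in> coboundaries1 s II"
    have fc: "f \<in> cochains1 s II" using fb unfolding coboundaries1_def by simp
    have "\<exists>g. \<forall>u v. link_edge s II u v \<longrightarrow> f u v = g u - g v" using fb unfolding coboundaries1_def by simp
    then obtain g where g: "\<forall>u v. link_edge s II u v \<longrightarrow> f u v = g u - g v" ..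
    have cz: "cob1 f u v w = 0" if t: "link_triangle s II u v w" for u v w
    proof -
      have e1: "f u v = g u - g v" using g tri_edges(1)[OF t] by simp
      have e2: "f v w = g v - g w" using g tri_edges(2)[OF t] by simp
      have e3: "f w u = g w - g u" using g tri_edges(3)[OF t] by simp
      show ?thesis unfolding cob1_def e1 e2 e3 by (rule cyc3)
    qed
    show "f \<in> cocycles1 s II" unfolding cocycles1_def
      by (intro CollectI conjI fc allI impI cz)
  qed
qed

end

context lk begin

lemma lp_nonneg: "0 \<le> link_prob s P" unfolding link_prob_def by simp

lemma ed_nonneg: "0 \<le> edge_dist s i0 i1 i2 f g"
  unfolding edge_dist_def using lp_nonneg by (simp add: add_nonneg_nonneg)

lemma main_ineq:
  fixes f :: "('k ^ 'n) set \<Rightarrow> ('k ^ 'n) set \<Rightarrow> 'g::group_add"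
  assumes f: "f \<in> cochains1 s II"
  shows "dist_Z1 s i0 i1 i2 f \<le> 13 * wt_cob s i0 i1 i2 f"
proof -
  define W where "W = real (card {F \<in> LF. bad f F})"
  define M where "M = real (card GG)"
  define N where "N = real (card LF)"
  have Npos: "N > 0"
  proof -
    have "card LF > 0" using LF_ne[OF sc] finite_LF[of s] card_gt_0_iff by blast
    then show ?thesis unfolding N_def by simp
  qed
  have Mpos: "M > 0"
  proof -
    have "card GG > 0" using id_Gs[of s] finite_Gs[of s] card_gt_0_iff by blast
    then show ?thesis unfolding M_def by simp
  qed
  have wt: "wt_cob s i0 i1 i2 f = W / N"
    unfolding wt_cob_def link_prob_def W_def N_def bad_def by simp
  let ?c = "\<lambda>i j h. real (card {F \<in> LF. f (at_dim F i) (at_dim F j) \<noteq> dl f h (at_dim F i) (at_dim F j)})"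
  have E01: "\<exists>ts. length ts \<le> 7 \<and> (\<forall>t\<in>set ts. istri t) \<and>
      (\<forall>f'::('k ^ 'n) set \<Rightarrow> ('k ^ 'n) set \<Rightarrow> 'g. f' \<in> cochains1 s II \<longrightarrow> (\<forall>t\<in>set ts. okt f' t) \<longrightarrow>
        Gc f' (at_dim F i0) + f' (at_dim F i0) (at_dim F i1) = Gc f' (at_dim F i1))" if F: "F \<in> LF" for F
  proof -
    note t = flag_tri[OF F]
    show ?thesis by (rule E_ab) (use t in auto)
  qed
  have E02: "\<exists>ts. length ts \<le> 12 \<and> (\<forall>t\<in>set ts. istri t) \<and>
      (\<forall>f'::('k ^ 'n) set \<Rightarrow> ('k ^ 'n) set \<Rightarrow> 'g. f' \<in> cochains1 s II \<longrightarrow> (\<forall>t\<in>set ts. okt f' t) \<longrightarrow>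
        Gc f' (at_dim F i0) + f' (at_dim F i0) (at_dim F i2) = Gc f' (at_dim F i2))" if F: "F \<in> LF" for F
  proof -
    note t = flag_tri[OF F]
    have "at_dim F i0 \<subseteq> at_dim F i2" using t by blast
    then show ?thesis by (rule E_ac[rotated 2]) (use t in auto)
  qed
  have E12: "\<exists>ts. length ts \<le> 20 \<and> (\<forall>t\<in>set ts. istri t) \<and>
      (\<forall>f'::('k ^ 'n) set \<Rightarrow> ('k ^ 'n) set \<Rightarrow> 'g. f' \<in> cochains1 s II \<longrightarrow> (\<forall>t\<in>set ts. okt f' t) \<longrightarrow>
        Gc f' (at_dim F i1) + f' (at_dim F i1) (at_dim F i2) = Gc f' (at_dim F i2))" if F: "F \<in> LF" for F
  proof -
    note t = flag_tri[OF F]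
    show ?thesis by (rule E_bc) (use t in auto)
  qed
  have b01: "(\<Sum>h\<in>GG. ?c i0 i1 h) \<le> 7 * M * W"
    using edge_bound[OF f I0 I1 E01] unfolding M_def W_def by simp
  have b02: "(\<Sum>h\<in>GG. ?c i0 i2 h) \<le> 12 * M * W"
    using edge_bound[OF f I0 I2 E02] unfolding M_def W_def by simp
  have b12: "(\<Sum>h\<in>GG. ?c i1 i2 h) \<le> 20 * M * W"
    using edge_bound[OF f I1 I2 E12] unfolding M_def W_def by simp
  have ed: "edge_dist s i0 i1 i2 f (dl f h) = 1/3 * ((?c i0 i1 h + ?c i0 i2 h + ?c i1 i2 h) / N)" for h
    unfolding edge_dist_def link_prob_def N_def by (simp add: add_divide_distrib)
  have dle: "dist_Z1 s i0 i1 i2 f \<le> edge_dist s i0 i1 i2 f (dl f h)" for h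
  proof -
    have mem: "edge_dist s i0 i1 i2 f (dl f h) \<in> edge_dist s i0 i1 i2 f ` cocycles1 s II"
      using dl_cocycle[of f h] by blast
    have bdd: "bdd_below (edge_dist s i0 i1 i2 f ` (cocycles1 s II :: (('k ^ 'n) set \<Rightarrow> ('k ^ 'n) set \<Rightarrow> 'g) set))"
      using ed_nonneg by (intro bdd_belowI[of _ 0]) auto
    show ?thesis unfolding dist_Z1_def using cInf_lower[OF mem bdd] .
  qed
  have "M * dist_Z1 s i0 i1 i2 f = (\<Sum>h\<in>GG. dist_Z1 s i0 i1 i2 f)" unfolding M_def by simp
  also have "\<dots> \<le> (\<Sum>h\<in>GG. edge_dist s i0 i1 i2 f (dl f h))" by (intro sum_mono dle)
  also have "\<dots> = 1/3 * (((\<Sum>h\<in>GG. ?c i0 i1 h) + (\<Sum>h\<in>GG. ?c i0 i2 h) + (\<Sum>h\<in>GG. ?c i1 i2 h)) / N)"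
  proof -
    have "(\<Sum>h\<in>GG. edge_dist s i0 i1 i2 f (dl f h)) = 1/3 * ((\<Sum>h\<in>GG. ?c i0 i1 h + ?c i0 i2 h + ?c i1 i2 h) / N)"
      unfolding ed by (simp add: sum_distrib_left sum_divide_distrib)
    also have "(\<Sum>h\<in>GG. ?c i0 i1 h + ?c i0 i2 h + ?c i1 i2 h) = (\<Sum>h\<in>GG. ?c i0 i1 h) + (\<Sum>h\<in>GG. ?c i0 i2 h) + (\<Sum>h\<in>GG. ?c i1 i2 h)"
      by (simp add: sum.distrib)
    finally show ?thesis .
  qed
  also have "\<dots> \<le> 1/3 * ((7 * M * W + 12 * M * W + 20 * M * W) / N)"
    using b01 b02 b12 Npos by (intro mult_left_mono divide_right_mono) auto
  also have "\<dots> = M * (13 * (W / N))" by (simp add: field_simps)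
  finally have "M * dist_Z1 s i0 i1 i2 f \<le> M * (13 * (W / N))" .
  then have "dist_Z1 s i0 i1 i2 f \<le> 13 * (W / N)" using Mpos by (rule mult_left_le_imp_le)
  then show ?thesis using wt by simp
qed

lemma final: "link_cob_expander s i0 i1 i2 TYPE('g::group_add) (1/13)"
  unfolding link_cob_expander_def
proof (intro conjI allI impI)
  show "(cocycles1 s II :: (('k ^ 'n) set \<Rightarrow> ('k ^ 'n) set \<Rightarrow> 'g) set) = coboundaries1 s II"
    by (rule Z_eq_B)
  fix f :: "('k ^ 'n) set \<Rightarrow> ('k ^ 'n) set \<Rightarrow> 'g"
  assume "f \<in> cochains1 s II \<and> f \<notin> cocycles1 s II"
  then have "dist_Z1 s i0 i1 i2 f \<le> 13 * wt_cob s i0 i1 i2 f" using main_ineq by blast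
  then show "1 / 13 * dist_Z1 s i0 i1 i2 f \<le> wt_cob s i0 i1 i2 f" by simp
qed

end

theorem lemma3p17:
  fixes s :: "('k::{field,finite} ^ 'n) set set"
    and i0 i1 i2 :: nat
  assumes d3: "CARD('n) \<ge> 3"
    and I_range: "1 \<le> i0" "i0 < i1" "i1 < i2" "i2 \<le> CARD('n) - 1"
    and s_face: "is_chain s" "\<forall>V\<in>s. vec.dim V \<notin> {i0, i1, i2}"
    and cond1: "2 * i0 \<le> i1 \<or> (\<exists>V\<in>s. i0 < vec.dim V \<and> vec.dim V < i1)"
    and cond2: "2 * i1 - i0 \<le> i2
       \<or> (\<exists>V\<in>s. i0 < vec.dim V \<and> vec.dim V < i1 \<and> 2 * i1 - vec.dim V \<le> i2)
       \<or> (\<exists>W\<in>s. i1 < vec.dim W \<and> vec.dim W < i2)"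
  shows "link_cob_expander s i0 i1 i2 TYPE('g::group_add) (1/13)"
proof -
  interpret L: lk s i0 i1 i2
    using d3 I_range s_face cond1 cond2 by (unfold_locales) auto
  show ?thesis by (rule L.final)
qed


end
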